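(* Let $S>0$, $d\ge1$, $\Delta s=S/(d+1)$ and $\boldsymbol L$ the $d\times d$ tridiagonal matrix $\Delta s^{-2}\,\mathrm{tridiag}(1,-2,1)$. Consider the linear Hamiltonian system in $(\boldsymbol u,\boldsymbol p)\in\mathbb{R}^d\times\mathbb{R}^d$ $$\dot{\boldsymbol u}=-\boldsymbol L^{-1}\boldsymbol p,\qquad \dot{\boldsymbol p}=\boldsymbol L\boldsymbol u-\boldsymbol u,$$ and for $c\in[0,1]$ the Strang splitting integrator $\psi_h=\varphi^{(B)}_{h/2}\circ\varphi^{(A)}_h\circ\varphi^{(B)}_{h/2}$, where $\varphi^{(A)}_t$ is the flow of $\dot{\boldsymbol u}=-\boldsymbol L^{-1}\boldsymbol p,\ \dot{\boldsymbol p}=c^2\boldsymbol L\boldsymbol u$ and $\varphi^{(B)}_t$ the flow of $\dot{\boldsymbol u}=0,\ \dot{\boldsymbol p}=(1-c^2)\boldsymbol L\boldsymbol u-\boldsymbol u$. Let $\omega_1^2=\frac4{\Delta s^2}\sin^2\!\big(\frac\pi{2(d+1)}\big)$ be the smallest eigenvalue of $-\boldsymbol L$. If $h>0$ satisfies $$ch+2\arctan\!\Big(\frac{h(1+(1-c^2)\omega_1^2)}{2c\omega_1^2}\Big)<\pi\ \text{ if }c\in(0,1],\qquad h<\frac{2\omega_1}{\sqrt{1+\omega_1^2}}\ \text{ if }c=0,$$ then the integrator is stable, i.e. the powers $\psi_h^n$, $n=0,1,2,\dots$, are uniformly bounded.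
   Context: This is the integrator used in preconditioned HMC (mass matrix $-\boldsymbol L$) for the discretized Ornstein–Uhlenbeck bridge on $[0,S]$ with homogeneous Dirichlet conditions; $c=0$ gives velocity Verlet. *)

theory Defs
  imports Complex_Main "Jordan_Normal_Form.Matrix"
begin

definition ds :: "real \<Rightarrow> nat \<Rightarrow> real" where
  "ds S d = S / real (d + 1)"

definition Lmat :: "real \<Rightarrow> nat \<Rightarrow> real mat" where
  "Lmat S d = mat d d (\<lambda>(i, j).
     (if i = j then -2 else if i = j + 1 \<or> j = i + 1 then 1 else 0) / (ds S d)\<^sup>2)"

definition Linv :: "real \<Rightarrow> nat \<Rightarrow> real mat" where
  "Linv S d = (THE B. B \<in> carrier_mat d d \<and> Lmat S d * B = 1\<^sub>m d \<and> B * Lmat S d = 1\<^sub>m d)"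

definition lin_flow :: "nat \<Rightarrow> real mat \<Rightarrow> real \<Rightarrow> real vec \<Rightarrow> real vec" where
  "lin_flow n M t x = (THE y. \<exists>X :: real \<Rightarrow> real vec.
      (\<forall>s. dim_vec (X s) = n) \<and> X 0 = x \<and>
      (\<forall>s. \<forall>i<n. ((\<lambda>r. X r $ i) has_real_derivative (M *\<^sub>v X s) $ i) (at s)) \<and>
      X t = y)"

definition MA :: "real \<Rightarrow> nat \<Rightarrow> real \<Rightarrow> real mat" where
  "MA S d c = four_block_mat (0\<^sub>m d d) (- Linv S d) (c\<^sup>2 \<cdot>\<^sub>m Lmat S d) (0\<^sub>m d d)"

definition MB :: "real \<Rightarrow> nat \<Rightarrow> real \<Rightarrow> real mat" where
  "MB S d c = four_block_mat (0\<^sub>m d d) (0\<^sub>m d d) ((1 - c\<^sup>2) \<cdot>\<^sub>m Lmat S d - 1\<^sub>m d) (0\<^sub>m d d)"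

definition strang :: "real \<Rightarrow> nat \<Rightarrow> real \<Rightarrow> real \<Rightarrow> real vec \<Rightarrow> real vec" where
  "strang S d c h = lin_flow (2 * d) (MB S d c) (h / 2) \<circ> lin_flow (2 * d) (MA S d c) h
                     \<circ> lin_flow (2 * d) (MB S d c) (h / 2)"

definition vnorm :: "real vec \<Rightarrow> real" where
  "vnorm x = sqrt (\<Sum>i<dim_vec x. (x $ i)\<^sup>2)"

definition omega1 :: "real \<Rightarrow> nat \<Rightarrow> real" where
  "omega1 S d = 2 / ds S d * sin (pi / (2 * real (d + 1)))"

end

theory Submission
  imports Defs "Jordan_Normal_Form.Determinant"
begin


lemma mv_sum: assumes "M \<in> carrier_mat n n" "i < n" "dim_vec V = n"
  shows "(M *\<^sub>v V) $ i = (\<Sum>j<n. M $$ (i,j) * V $ j)"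
  using assms by (auto simp: scalar_prod_def row_def atLeast0LessThan)

lemma ode_unique:
  fixes M :: "real mat"
  assumes M: "M \<in> carrier_mat n n" and t: "0 \<le> t"
    and dX: "\<forall>s. dim_vec (X s) = n"
    and DX: "\<forall>s. \<forall>i<n. ((\<lambda>r. X r $ i) has_real_derivative (M *\<^sub>v X s) $ i) (at s)"
    and dY: "\<forall>s. dim_vec (Y s) = n"
    and DY: "\<forall>s. \<forall>i<n. ((\<lambda>r. Y r $ i) has_real_derivative (M *\<^sub>v Y s) $ i) (at s)"
    and X0: "X 0 = Y 0"
  shows "X t = Y t"
proof -
  define z where "z i r = X r $ i - Y r $ i" for i r
  have Dz: "((\<lambda>r. z i r) has_real_derivative (\<Sum>j<n. M$$(i,j) * z j s)) (at s)" if "i<n" for i s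
  proof -
    have "((\<lambda>r. z i r) has_real_derivative (M *\<^sub>v X s)$i - (M *\<^sub>v Y s)$i) (at s)"
      unfolding z_def using DX DY that by (intro DERIV_diff) auto
    moreover have "(M *\<^sub>v X s)$i - (M *\<^sub>v Y s)$i = (\<Sum>j<n. M$$(i,j) * z j s)"
      using mv_sum[OF M that] dX dY by (simp add: z_def sum_subtractf[symmetric] algebra_simps)
    ultimately show ?thesis by simp
  qed
  define g where "g r = (\<Sum>i<n. (z i r)^2)" for r
  define K where "K = (\<Sum>i<n. \<Sum>j<n. \<bar>M$$(i,j)\<bar>)"
  define g' where "g' s = (\<Sum>i<n. 2 * z i s * (\<Sum>j<n. M$$(i,j) * z j s))" for s
  have Dg: "(g has_real_derivative g' s) (at s)" for s
  proof -
    have "((\<lambda>r. \<Sum>i<n. (z i r)^2) has_real_derivative (\<Sum>i<n. 2 * z i s * (\<Sum>j<n. M$$(i,j) * z j s))) (at s)"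
      apply (rule DERIV_sum)
      subgoal for i using DERIV_power[OF Dz[of i s], of 2] by (simp add: algebra_simps)
      done
    then show ?thesis unfolding g_def g'_def .
  qed
  have gnn: "0 \<le> g r" for r unfolding g_def by (auto intro: sum_nonneg)
  have zle: "\<bar>z i r * z j r\<bar> \<le> g r" if "i<n" "j<n" for i j r
  proof -
    have a: "(z i r)^2 \<le> g r" unfolding g_def
      using member_le_sum[of i "{..<n}" "\<lambda>i. (z i r)^2"] that by auto
    have b: "(z j r)^2 \<le> g r" unfolding g_def
      using member_le_sum[of j "{..<n}" "\<lambda>i. (z i r)^2"] that by auto
    have c: "2 * \<bar>z i r * z j r\<bar> \<le> (z i r)^2 + (z j r)^2"
      using sum_squares_bound[of "\<bar>z i r\<bar>" "\<bar>z j r\<bar>"]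
      by (simp add: abs_mult power2_eq_square)
    from a b c show ?thesis by linarith
  qed
  have bound: "g' s \<le> 2*K*g s" for s
  proof -
    have "g' s = 2 * (\<Sum>i<n. \<Sum>j<n. M$$(i,j) * (z i s * z j s))"
      unfolding g'_def by (simp add: sum_distrib_left algebra_simps)
    also have "\<dots> \<le> 2 * (\<Sum>i<n. \<Sum>j<n. \<bar>M$$(i,j)\<bar> * g s)"
    proof -
      have "M$$(i,j) * (z i s * z j s) \<le> \<bar>M$$(i,j)\<bar> * g s" if "i<n" "j<n" for i j
      proof -
        have "M$$(i,j) * (z i s * z j s) \<le> \<bar>M$$(i,j)\<bar> * \<bar>z i s * z j s\<bar>"
          by (metis abs_ge_self abs_mult)
        also have "\<dots> \<le> \<bar>M$$(i,j)\<bar> * g s" using zle[OF that] by (intro mult_left_mono) auto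
        finally show ?thesis .
      qed
      then show ?thesis by (intro mult_left_mono sum_mono) auto
    qed
    also have "\<dots> = 2*K*g s" by (simp add: K_def sum_distrib_right)
    finally show ?thesis .
  qed
  define hh where "hh r = g r * exp (-(2*K) * r)" for r
  have "hh t \<le> hh 0"
  proof (rule DERIV_nonpos_imp_nonincreasing[OF t])
    fix x
    have "(hh has_real_derivative g' x * exp (-(2*K) * x) + g x * (exp (-(2*K) * x) * (-(2*K)))) (at x)"
    proof -
      have E: "((\<lambda>r. exp (-(2*K)*r)) has_real_derivative exp (-(2*K)*x) * (-(2*K))) (at x)"
        by (auto intro!: derivative_eq_intros)
      show ?thesis using DERIV_mult[OF Dg E] unfolding hh_def by (simp add: algebra_simps)
    qed
    moreover have "g' x * exp (-(2*K) * x) + g x * (exp (-(2*K) * x) * (-(2*K))) \<le> 0"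
    proof -
      have "g' x * exp (-(2*K) * x) \<le> 2*K*g x * exp (-(2*K) * x)"
        using bound[of x] by (intro mult_right_mono) auto
      then show ?thesis by (simp add: algebra_simps)
    qed
    ultimately show "\<exists>y. (hh has_real_derivative y) (at x) \<and> y \<le> 0" by blast
  qed
  moreover have "hh 0 = 0" unfolding hh_def g_def z_def using X0 by simp
  ultimately have "g t \<le> 0" unfolding hh_def
    by (smt (verit, best) exp_gt_zero mult_pos_pos gnn)
  with gnn have "g t = 0" by (meson order_antisym)
  then have "\<forall>i<n. (z i t)^2 = 0" unfolding g_def
    by (subst (asm) sum_nonneg_eq_0_iff) auto
  then show ?thesis using dX dY by (intro eq_vecI) (auto simp: z_def)
qed

lemma lin_flow_eq:
  fixes M :: "real mat"
  assumes M: "M \<in> carrier_mat n n" and t: "0 \<le> t"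
    and dX: "\<forall>s. dim_vec (X s) = n"
    and DX: "\<forall>s. \<forall>i<n. ((\<lambda>r. X r $ i) has_real_derivative (M *\<^sub>v X s) $ i) (at s)"
  shows "lin_flow n M t (X 0) = X t"
  unfolding lin_flow_def
proof (rule the_equality)
  show "\<exists>Xa. (\<forall>s. dim_vec (Xa s) = n) \<and> Xa 0 = X 0 \<and>
      (\<forall>s. \<forall>i<n. ((\<lambda>r. Xa r $ i) has_real_derivative (M *\<^sub>v Xa s) $ i) (at s)) \<and> Xa t = X t"
    using dX DX by blast
next
  fix y assume "\<exists>Xa. (\<forall>s. dim_vec (Xa s) = n) \<and> Xa 0 = X 0 \<and>
      (\<forall>s. \<forall>i<n. ((\<lambda>r. Xa r $ i) has_real_derivative (M *\<^sub>v Xa s) $ i) (at s)) \<and> Xa t = y"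
  then obtain Y where "\<forall>s. dim_vec (Y s) = n" "Y 0 = X 0"
      "\<forall>s. \<forall>i<n. ((\<lambda>r. Y r $ i) has_real_derivative (M *\<^sub>v Y s) $ i) (at s)" "Y t = y" by blast
  then show "y = X t" using ode_unique[OF M t, of Y X] dX DX by auto
qed


definition Tm :: "nat \<Rightarrow> nat \<Rightarrow> real" where
  "Tm i j = (if i = j then -2 else if i = j + 1 \<or> j = i + 1 then 1 else 0)"

definition Qf :: "nat \<Rightarrow> (nat \<Rightarrow> real) \<Rightarrow> real" where
  "Qf d u = (\<Sum>m<d. (u m - (if m = 0 then 0 else u (m - 1)))^2) + (if d = 0 then 0 else (u (d - 1))^2)"

lemma sum_Tm_col: "(\<Sum>i<d. f i * Tm i d) = (if d = 0 then 0 else f (d - 1))"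
proof (cases d)
  case (Suc k)
  have "(\<Sum>i<k. f i * Tm i (Suc k)) = 0" by (intro sum.neutral) (auto simp: Tm_def)
  then show ?thesis using Suc by (simp add: Tm_def)
qed simp

lemma sum_Tm_row: "(\<Sum>j<d. Tm d j * f j) = (if d = 0 then 0 else f (d - 1))"
proof (cases d)
  case (Suc k)
  have "(\<Sum>j<k. Tm (Suc k) j * f j) = 0" by (intro sum.neutral) (auto simp: Tm_def)
  then show ?thesis using Suc by (simp add: Tm_def)
qed simp

lemma Tm_form: "(\<Sum>i<d. \<Sum>j<d. u i * Tm i j * u j) = - Qf d u"
proof (induction d)
  case 0 then show ?case by (simp add: Qf_def)
next
  case (Suc d)
  have "(\<Sum>i<Suc d. \<Sum>j<Suc d. u i * Tm i j * u j) =
     (\<Sum>i<d. \<Sum>j<d. u i * Tm i j * u j) + (\<Sum>i<d. u i * Tm i d) * u d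
       + u d * (\<Sum>j<d. Tm d j * u j) + u d * Tm d d * u d"
    by (simp add: sum.distrib sum_distrib_left sum_distrib_right algebra_simps)
  also have "\<dots> = - Qf d u + 2 * (if d = 0 then 0 else u (d - 1)) * u d - 2 * u d * u d"
    using Suc.IH by (simp only: sum_Tm_col sum_Tm_row) (simp add: Tm_def)
  also have "\<dots> = - Qf (Suc d) u"
    by (cases d) (simp_all add: Qf_def power2_eq_square algebra_simps)
  finally show ?case .
qed

lemma picone:
  fixes a b fa fb :: real
  assumes "0 \<le> fa" "0 \<le> fb" "a = 0 \<or> 0 < fa" "b = 0 \<or> 0 < fb"
  shows "b^2 * (1 - fa / fb) + a^2 * (1 - fb / fa) \<le> (b - a)^2"
proof (cases "a = 0")
  case True
  then show ?thesis
  proof (cases "b = 0")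
    case False
    with assms have "0 < fb" by auto
    then have "0 \<le> fa / fb" using assms by auto
    then have "b^2 * (1 - fa / fb) \<le> b^2" by (simp add: mult_left_le)
    then show ?thesis using True by simp
  qed simp
next
  case a: False
  show ?thesis
  proof (cases "b = 0")
    case True
    from a assms have "0 < fa" by auto
    then have "0 \<le> fb / fa" using assms by auto
    then have "a^2 * (1 - fb / fa) \<le> a^2" by (simp add: mult_left_le)
    then show ?thesis using True by simp
  next
    case False
    with a assms have p: "0 < fa" "0 < fb" by auto
    have "(b - a)^2 - (b^2 * (1 - fa / fb) + a^2 * (1 - fb / fa)) = (b * fa - a * fb)^2 / (fa * fb)"
      using p by (simp add: field_simps power2_eq_square)
    moreover have "0 \<le> (b * fa - a * fb)^2 / (fa * fb)" using p by simp
    ultimately show ?thesis by linarith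
  qed
qed

lemma sum_shift_sq:
  fixes u :: "nat \<Rightarrow> real"
  assumes "u d = 0"
  shows "(\<Sum>m<Suc (Suc d). (if m = 0 then 0 else u (m - 1))^2) = (\<Sum>k<d. (u k)^2)"
proof -
  have "(\<Sum>m<Suc (Suc d). (if m = 0 then 0 else u (m - 1))^2) = (\<Sum>m<Suc d. (u m)^2)"
    by (subst sum.lessThan_Suc_shift) simp
  also have "\<dots> = (\<Sum>k<d. (u k)^2)" using assms by simp
  finally show ?thesis .
qed

lemma Qf_edges:
  fixes u :: "nat \<Rightarrow> real"
  assumes "u d = 0"
  defines "U \<equiv> \<lambda>m. if m = 0 then 0 else u (m - 1)"
  shows "Qf d u = (\<Sum>m<Suc d. (U (Suc m) - U m)^2)"
  using assms by (cases d) (simp_all add: Qf_def U_def)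

lemma wirtinger:
  fixes u :: "nat \<Rightarrow> real"
  assumes ud: "u d = 0"
  shows "4 * (sin (pi / (2 * real (d + 1))))^2 * (\<Sum>k<d. (u k)^2) \<le> Qf d u"
proof -
  define U where "U = (\<lambda>m. if m = 0 then 0 else u (m - 1))"
  define n where "n = real (d + 1)"
  have n0: "0 < n" unfolding n_def by simp
  define \<phi> where "\<phi> m = sin (pi * real m / n)" for m :: nat
  define lam where "lam = 2 - 2 * cos (pi / n)"
  define G where "G m = (U m)^2 * (1 - \<phi> (m - 1) / \<phi> m)" for m
  define H where "H m = (U m)^2 * (1 - \<phi> (Suc m) / \<phi> m)" for m
  have \<phi>nn: "0 \<le> \<phi> m" if "m \<le> d + 1" for m
  proof -
    have "real m \<le> n" using that unfolding n_def by simp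
    then have "pi * real m \<le> pi * n" by (intro mult_left_mono) auto
    then have "pi * real m / n \<le> pi" using n0 by (simp add: pos_divide_le_eq)
    moreover have "0 \<le> pi * real m / n" using n0 by simp
    ultimately show ?thesis unfolding \<phi>_def by (intro sin_ge_zero) auto
  qed
  have \<phi>pos: "0 < \<phi> m" if "1 \<le> m" "m \<le> d" for m
  proof -
    have "real m < n" using that unfolding n_def by simp
    then have "pi * real m < pi * n" by (intro mult_strict_left_mono) auto
    then have "pi * real m / n < pi" using n0 by (simp add: pos_divide_less_eq)
    moreover have "0 < pi * real m / n" using n0 that by simp
    ultimately show ?thesis unfolding \<phi>_def by (intro sin_gt_zero) auto
  qed
  have U0: "U 0 = 0" and Ud: "U (Suc d) = 0" using ud by (auto simp: U_def)
  have edge: "G (Suc m) + H m \<le> (U (Suc m) - U m)^2" if "m < Suc d" for m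
  proof -
    have "G (Suc m) + H m = (U (Suc m))^2 * (1 - \<phi> m / \<phi> (Suc m)) + (U m)^2 * (1 - \<phi> (Suc m) / \<phi> m)"
      by (simp add: G_def H_def)
    also have "\<dots> \<le> (U (Suc m) - U m)^2"
    proof (rule picone)
      show "0 \<le> \<phi> m" "0 \<le> \<phi> (Suc m)" using that by (auto intro: \<phi>nn)
      show "U m = 0 \<or> 0 < \<phi> m" using that \<phi>pos[of m] by (cases "m = 0") (auto simp: U_def)
      show "U (Suc m) = 0 \<or> 0 < \<phi> (Suc m)" using that \<phi>pos[of "Suc m"] ud
      proof (cases "Suc m \<le> d")
        case False
        then have "m = d" using that by simp
        then show ?thesis using ud by (simp add: U_def)
      qed (use \<phi>pos[of "Suc m"] in auto)
    qed
    finally show ?thesis .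
  qed
  have GH: "G m + H m = lam * (U m)^2" if "m < Suc (Suc d)" for m
  proof (cases "m = 0 \<or> m = Suc d")
    case True then show ?thesis using U0 Ud by (auto simp: G_def H_def)
  next
    case False
    then have m: "1 \<le> m" "m \<le> d" using that by auto
    have p: "0 < \<phi> m" by (rule \<phi>pos[OF m])
    have "\<phi> (m - 1) + \<phi> (Suc m) = 2 * \<phi> m * cos (pi / n)"
    proof -
      have r: "real (m - 1) = real m - 1" using m by simp
      have "\<phi> (m - 1) = sin (pi * real m / n - pi / n)"
        unfolding \<phi>_def r by (simp add: right_diff_distrib diff_divide_distrib)
      moreover have "\<phi> (Suc m) = sin (pi * real m / n + pi / n)"
        unfolding \<phi>_def by (simp add: distrib_left add_divide_distrib) (simp add: add.commute)
      ultimately show ?thesis unfolding sin_diff sin_add by (simp add: \<phi>_def)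
    qed
    note e = this
    have "G m + H m = (U m)^2 * ((1 - \<phi> (m - 1) / \<phi> m) + (1 - \<phi> (Suc m) / \<phi> m))"
      unfolding G_def H_def by (simp only: distrib_left)
    also have "(1 - \<phi> (m - 1) / \<phi> m) + (1 - \<phi> (Suc m) / \<phi> m) = 2 - (\<phi> (m - 1) + \<phi> (Suc m)) / \<phi> m"
      by (simp add: add_divide_distrib)
    also have "(\<phi> (m - 1) + \<phi> (Suc m)) / \<phi> m = 2 * cos (pi / n)"
      unfolding e using p by simp
    finally show ?thesis unfolding lam_def by (simp add: mult.commute)
  qed
  have "Qf d u = (\<Sum>m<Suc d. (U (Suc m) - U m)^2)"
    using Qf_edges[of u d, OF ud] unfolding U_def by simp
  also have "\<dots> \<ge> (\<Sum>m<Suc d. G (Suc m) + H m)"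
    using edge by (intro sum_mono) auto
  finally have "(\<Sum>m<Suc d. G (Suc m) + H m) \<le> Qf d u" .
  moreover have "(\<Sum>m<Suc d. G (Suc m) + H m) = (\<Sum>m<Suc (Suc d). G m + H m)"
  proof -
    have "(\<Sum>m<Suc (Suc d). G m) = (\<Sum>m<Suc d. G (Suc m))"
      by (subst sum.lessThan_Suc_shift) (simp add: G_def U0)
    moreover have "(\<Sum>m<Suc (Suc d). H m) = (\<Sum>m<Suc d. H m)"
      by (simp add: H_def Ud)
    ultimately show ?thesis by (simp add: sum.distrib)
  qed
  moreover have "(\<Sum>m<Suc (Suc d). G m + H m) = lam * (\<Sum>k<d. (u k)^2)"
  proof -
    have "(\<Sum>m<Suc (Suc d). G m + H m) = (\<Sum>m<Suc (Suc d). lam * (U m)^2)"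
      by (rule sum.cong) (auto simp: GH)
    also have "\<dots> = lam * (\<Sum>m<Suc (Suc d). (U m)^2)" by (rule sum_distrib_left[symmetric])
    also have "(\<Sum>m<Suc (Suc d). (U m)^2) = (\<Sum>k<d. (u k)^2)"
      using sum_shift_sq[of u d, OF ud] unfolding U_def .
    finally show ?thesis .
  qed
  moreover have "lam = 4 * (sin (pi / (2 * real (d + 1))))^2"
  proof -
    have "cos (pi / n) = cos (2 * (pi / (2 * n)))" by simp
    also have "\<dots> = 1 - 2 * (sin (pi / (2 * n)))^2" by (rule cos_double_sin)
    finally show ?thesis unfolding lam_def n_def by simp
  qed
  ultimately show ?thesis by simp
qed

lemma Qf_upper:
  fixes u :: "nat \<Rightarrow> real"
  assumes ud: "u d = 0"
  shows "Qf d u \<le> 4 * (\<Sum>k<d. (u k)^2)"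
proof -
  define U where "U = (\<lambda>m. if m = 0 then 0 else u (m - 1))"
  have "Qf d u = (\<Sum>m<Suc d. (U (Suc m) - U m)^2)"
    using Qf_edges[of u d, OF ud] unfolding U_def by simp
  also have "\<dots> \<le> (\<Sum>m<Suc d. 2 * (U (Suc m))^2 + 2 * (U m)^2)"
    apply (intro sum_mono)
    subgoal for m using zero_le_power2[of "U (Suc m) + U m"] by (simp add: power2_eq_square algebra_simps)
    done
  also have "\<dots> = 2 * (\<Sum>m<Suc d. (U (Suc m))^2) + 2 * (\<Sum>m<Suc d. (U m)^2)"
    by (simp add: sum.distrib sum_distrib_left)
  also have "\<dots> = 4 * (\<Sum>m<Suc (Suc d). (U m)^2)"
  proof -
    have A1: "(\<Sum>m<Suc (Suc d). (U m)^2) = (\<Sum>m<Suc d. (U (Suc m))^2)"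
      by (subst sum.lessThan_Suc_shift) (simp add: U_def)
    have A2: "(\<Sum>m<Suc (Suc d). (U m)^2) = (\<Sum>m<Suc d. (U m)^2)"
      using ud by (simp add: U_def)
    show ?thesis unfolding A1[symmetric] A2[symmetric] by simp
  qed
  also have "\<dots> = 4 * (\<Sum>k<d. (u k)^2)"
    using sum_shift_sq[of u d, OF ud] unfolding U_def by simp
  finally show ?thesis .
qed


lemma sp_sum: "dim_vec w = n \<Longrightarrow> v \<bullet> w = (\<Sum>i<n. v $ i * w $ i)"
  by (auto simp: scalar_prod_def atLeast0LessThan)

lemma sp_self_nonneg: "0 \<le> (v :: real vec) \<bullet> v"
  unfolding scalar_prod_def by (auto intro: sum_nonneg)

lemma sp_self_zero: assumes "(v :: real vec) \<in> carrier_vec n" "v \<bullet> v = 0" shows "v = 0\<^sub>v n"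
proof -
  have "\<forall>i\<in>{0..<dim_vec v}. v $ i * v $ i = 0"
    using assms(2) unfolding scalar_prod_def by (subst (asm) sum_nonneg_eq_0_iff) auto
  then show ?thesis using assms(1) by (intro eq_vecI) auto
qed

lemma ds_pos: "S > 0 \<Longrightarrow> ds S d > 0" by (simp add: ds_def)

lemma L_carrier[simp]: "Lmat S d \<in> carrier_mat d d" by (simp add: Lmat_def)
lemma L_dims[simp]: "dim_row (Lmat S d) = d" "dim_col (Lmat S d) = d" by (simp_all add: Lmat_def)

lemma L_entry: "i < d \<Longrightarrow> j < d \<Longrightarrow> Lmat S d $$ (i,j) = Tm i j / (ds S d)^2"
  by (simp add: Lmat_def Tm_def)

lemma Tm_sym: "Tm i j = Tm j i" by (auto simp: Tm_def)

lemma L_bilin: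
  assumes "a \<in> carrier_vec d" "b \<in> carrier_vec d"
  shows "a \<bullet> (Lmat S d *\<^sub>v b) = (\<Sum>i<d. \<Sum>j<d. a $ i * Tm i j * b $ j) / (ds S d)^2"
proof -
  have "a \<bullet> (Lmat S d *\<^sub>v b) = (\<Sum>i<d. a $ i * (Lmat S d *\<^sub>v b) $ i)"
    by (rule sp_sum) simp
  also have "\<dots> = (\<Sum>i<d. a $ i * (\<Sum>j<d. Tm i j / (ds S d)^2 * b $ j))"
    using assms by (intro sum.cong refl) (simp add: mv_sum[of "Lmat S d" d] L_entry del: index_mult_mat_vec)
  also have "\<dots> = (\<Sum>i<d. \<Sum>j<d. a $ i * Tm i j * b $ j) / (ds S d)^2"
    by (simp add: sum_distrib_left sum_divide_distrib algebra_simps)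
  finally show ?thesis .
qed

lemma L_sym:
  assumes "a \<in> carrier_vec d" "b \<in> carrier_vec d"
  shows "a \<bullet> (Lmat S d *\<^sub>v b) = b \<bullet> (Lmat S d *\<^sub>v a)"
proof -
  have "(\<Sum>i<d. \<Sum>j<d. a $ i * Tm i j * b $ j) = (\<Sum>i<d. \<Sum>j<d. b $ i * Tm i j * a $ j)"
    by (subst sum.swap) (simp add: Tm_sym algebra_simps)
  then show ?thesis using assms by (simp add: L_bilin)
qed

lemma L_quad:
  assumes "u \<in> carrier_vec d"
  shows "u \<bullet> (Lmat S d *\<^sub>v u) = - Qf d (\<lambda>k. if k < d then u $ k else 0) / (ds S d)^2"
proof -
  have "(\<Sum>i<d. \<Sum>j<d. u $ i * Tm i j * u $ j) =
        (\<Sum>i<d. \<Sum>j<d. (\<lambda>k. if k < d then u $ k else 0) i * Tm i j * (\<lambda>k. if k < d then u $ k else 0) j)"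
    by (intro sum.cong refl) auto
  also have "\<dots> = - Qf d (\<lambda>k. if k < d then u $ k else 0)" by (rule Tm_form)
  finally show ?thesis using assms by (simp add: L_bilin)
qed

lemma sq_sum_vec: "(u :: real vec) \<in> carrier_vec d \<Longrightarrow> (\<Sum>k<d. ((\<lambda>k. if k < d then u $ k else 0) k)^2) = u \<bullet> u"
  apply (subst sp_sum[of u d])
   apply simp
  apply (rule sum.cong)
   apply simp
  apply (simp only: power2_eq_square)
  apply simp
  done

lemma omega1_sq: "(omega1 S d)^2 = 4 * (sin (pi / (2 * real (d + 1))))^2 / (ds S d)^2"
  by (simp add: omega1_def power_mult_distrib power_divide)

lemma omega1_pos: assumes "S > 0" shows "omega1 S d > 0"
proof -
  have "pi / (2 * real (d + 1)) \<le> pi / 2" by (rule divide_left_mono) auto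
  moreover have "pi / 2 < pi" by simp
  ultimately have lt: "pi / (2 * real (d + 1)) < pi" by linarith
  have "sin (pi / (2 * real (d + 1))) > 0" using sin_gt_zero[OF _ lt] by simp
  then show ?thesis using ds_pos[OF assms, of d] by (simp add: omega1_def)
qed

lemma L_coercive:
  assumes "S > 0" "u \<in> carrier_vec d"
  shows "(omega1 S d)^2 * (u \<bullet> u) \<le> - (u \<bullet> (Lmat S d *\<^sub>v u))"
proof -
  let ?f = "\<lambda>k. if k < d then u $ k else 0"
  have w: "4 * (sin (pi / (2 * real (d + 1))))^2 * (u \<bullet> u) \<le> Qf d ?f"
    using wirtinger[of ?f d] sq_sum_vec[OF assms(2)] by simp
  have p: "(ds S d)^2 > 0" using ds_pos[OF assms(1), of d] by simp
  show ?thesis unfolding L_quad[OF assms(2)] omega1_sq using w p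
    by (simp add: divide_right_mono mult.commute[of _ "u \<bullet> u"] le_divide_eq)
qed

lemma L_upper:
  assumes "S > 0" "u \<in> carrier_vec d"
  shows "- (u \<bullet> (Lmat S d *\<^sub>v u)) \<le> 4 / (ds S d)^2 * (u \<bullet> u)"
proof -
  let ?f = "\<lambda>k. if k < d then u $ k else 0"
  have w: "Qf d ?f \<le> 4 * (u \<bullet> u)"
    using Qf_upper[of ?f d] sq_sum_vec[OF assms(2)] by simp
  have p: "(ds S d)^2 > 0" using ds_pos[OF assms(1), of d] by simp
  show ?thesis unfolding L_quad[OF assms(2)] using w p
    by (simp add: divide_right_mono)
qed


lemma L_inj:
  assumes S: "S > 0" and v: "v \<in> carrier_vec d" and Lv: "Lmat S d *\<^sub>v v = 0\<^sub>v d"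
  shows "v = 0\<^sub>v d"
proof -
  have "v \<bullet> (Lmat S d *\<^sub>v v) = 0" using Lv v by simp
  with L_coercive[OF S v] have "(omega1 S d)^2 * (v \<bullet> v) \<le> 0" by simp
  moreover have "(omega1 S d)^2 > 0" using omega1_pos[OF S, of d] by simp
  ultimately have "v \<bullet> v \<le> 0" by (simp add: mult_le_0_iff)
  with sp_self_nonneg[of v] have "v \<bullet> v = 0" by simp
  then show ?thesis using sp_self_zero[OF v] by simp
qed

lemma L_inverse_exists:
  assumes S: "S > 0"
  shows "\<exists>B. B \<in> carrier_mat d d \<and> Lmat S d * B = 1\<^sub>m d \<and> B * Lmat S d = 1\<^sub>m d"
proof -
  have "det (Lmat S d) \<noteq> 0"
  proof
    assume "det (Lmat S d) = 0"
    then obtain v where v: "v \<in> carrier_vec d" "v \<noteq> 0\<^sub>v d" "Lmat S d *\<^sub>v v = 0\<^sub>v d"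
      using det_0_iff_vec_prod_zero[OF L_carrier[of S d]] by blast
    show False using L_inj[OF S v(1) v(3)] v(2) by simp
  qed
  from det_non_zero_imp_unit[OF L_carrier this, unfolded Units_def, of "()"]
  obtain B where "B \<in> carrier_mat d d" "B * Lmat S d = 1\<^sub>m d" "Lmat S d * B = 1\<^sub>m d"
    by (auto simp: ring_mat_def)
  then show ?thesis by blast
qed

lemma Linv_props:
  assumes S: "S > 0"
  shows "Linv S d \<in> carrier_mat d d" "Lmat S d * Linv S d = 1\<^sub>m d" "Linv S d * Lmat S d = 1\<^sub>m d"
proof -
  obtain B where B: "B \<in> carrier_mat d d" "Lmat S d * B = 1\<^sub>m d" "B * Lmat S d = 1\<^sub>m d"
    using L_inverse_exists[OF S] by blast
  have "Linv S d = B" unfolding Linv_def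
  proof (rule the_equality)
    show "B \<in> carrier_mat d d \<and> Lmat S d * B = 1\<^sub>m d \<and> B * Lmat S d = 1\<^sub>m d" using B by simp
  next
    fix C assume C: "C \<in> carrier_mat d d \<and> Lmat S d * C = 1\<^sub>m d \<and> C * Lmat S d = 1\<^sub>m d"
    have Cc: "C \<in> carrier_mat d d" using C by simp
    have "C = C * (Lmat S d * B)" using B Cc by simp
    also have "\<dots> = (C * Lmat S d) * B" by (rule assoc_mult_mat[OF Cc L_carrier B(1), symmetric])
    also have "\<dots> = B" using B Cc C by simp
    finally show "C = B" .
  qed
  then show "Linv S d \<in> carrier_mat d d" "Lmat S d * Linv S d = 1\<^sub>m d" "Linv S d * Lmat S d = 1\<^sub>m d"
    using B by auto
qed

lemma Linv_carrier: "S > 0 \<Longrightarrow> Linv S d \<in> carrier_mat d d" by (rule Linv_props(1))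

lemma L_Linv_vec: assumes "S > 0" "v \<in> carrier_vec d"
  shows "Lmat S d *\<^sub>v (Linv S d *\<^sub>v v) = v"
proof -
  have "Lmat S d *\<^sub>v (Linv S d *\<^sub>v v) = (Lmat S d * Linv S d) *\<^sub>v v"
    by (rule assoc_mult_mat_vec[OF L_carrier Linv_carrier[OF assms(1)] assms(2), symmetric])
  then show ?thesis using Linv_props[OF assms(1), of d] assms(2) by simp
qed

lemma Linv_L_vec: assumes "S > 0" "v \<in> carrier_vec d"
  shows "Linv S d *\<^sub>v (Lmat S d *\<^sub>v v) = v"
proof -
  have "Linv S d *\<^sub>v (Lmat S d *\<^sub>v v) = (Linv S d * Lmat S d) *\<^sub>v v"
    by (rule assoc_mult_mat_vec[OF Linv_carrier[OF assms(1)] L_carrier assms(2), symmetric])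
  then show ?thesis using Linv_props[OF assms(1), of d] assms(2) by simp
qed


lemma Linv_dim[simp]: "S > 0 \<Longrightarrow> dim_row (Linv S d) = d"
  by (rule carrier_matD(1)[OF Linv_carrier])

lemma Linv_vec_carrier[simp]: "S > 0 \<Longrightarrow> Linv S d *\<^sub>v v \<in> carrier_vec d"
  by (intro carrier_vecI) simp

lemma L_vec_carrier[simp]: "Lmat S d *\<^sub>v v \<in> carrier_vec d"
  by (intro carrier_vecI) simp

lemma Linv_sym:
  assumes S: "S > 0" and a: "a \<in> carrier_vec d" and b: "b \<in> carrier_vec d"
  shows "a \<bullet> (Linv S d *\<^sub>v b) = b \<bullet> (Linv S d *\<^sub>v a)"
proof -
  define A where "A = Linv S d *\<^sub>v a"
  define B where "B = Linv S d *\<^sub>v b"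
  have A: "A \<in> carrier_vec d" and B: "B \<in> carrier_vec d" using S by (simp_all add: A_def B_def)
  have a': "a = Lmat S d *\<^sub>v A" and b': "b = Lmat S d *\<^sub>v B"
    using L_Linv_vec[OF S a] L_Linv_vec[OF S b] by (simp_all add: A_def B_def)
  have "a \<bullet> B = (Lmat S d *\<^sub>v A) \<bullet> B" using a' by simp
  also have "\<dots> = B \<bullet> (Lmat S d *\<^sub>v A)" by (rule comm_scalar_prod[of _ d]) (use A B in auto)
  also have "\<dots> = A \<bullet> (Lmat S d *\<^sub>v B)" using L_sym[OF B A] by simp
  also have "\<dots> = A \<bullet> b" using b' by simp
  also have "\<dots> = b \<bullet> A" by (rule comm_scalar_prod[of _ d]) (use A b in auto)
  finally show ?thesis unfolding A_def B_def .
qed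

lemma L_psd: assumes "S > 0" "x \<in> carrier_vec d" shows "0 \<le> - (x \<bullet> (Lmat S d *\<^sub>v x))"
proof -
  have "0 \<le> (omega1 S d)^2 * (x \<bullet> x)" using sp_self_nonneg[of x] by simp
  then show ?thesis using L_coercive[OF assms] by linarith
qed

lemma sp_expand:
  fixes x y a b :: "real vec"
  assumes x: "x \<in> carrier_vec d" and y: "y \<in> carrier_vec d"
    and a: "a \<in> carrier_vec d" and b: "b \<in> carrier_vec d"
  shows "(e \<cdot>\<^sub>v x + y) \<bullet> (f \<cdot>\<^sub>v a + b) = e * f * (x \<bullet> a) + e * (x \<bullet> b) + f * (y \<bullet> a) + y \<bullet> b"
proof -
  have ex: "e \<cdot>\<^sub>v x \<in> carrier_vec d" and fa: "f \<cdot>\<^sub>v a \<in> carrier_vec d" using x a by auto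
  have "(e \<cdot>\<^sub>v x + y) \<bullet> (f \<cdot>\<^sub>v a + b) = (e \<cdot>\<^sub>v x) \<bullet> (f \<cdot>\<^sub>v a + b) + y \<bullet> (f \<cdot>\<^sub>v a + b)"
    by (rule add_scalar_prod_distrib[OF ex y]) (use fa b in auto)
  also have "(e \<cdot>\<^sub>v x) \<bullet> (f \<cdot>\<^sub>v a + b) = (e \<cdot>\<^sub>v x) \<bullet> (f \<cdot>\<^sub>v a) + (e \<cdot>\<^sub>v x) \<bullet> b"
    by (rule scalar_prod_add_distrib[OF ex fa b])
  also have "y \<bullet> (f \<cdot>\<^sub>v a + b) = y \<bullet> (f \<cdot>\<^sub>v a) + y \<bullet> b"
    by (rule scalar_prod_add_distrib[OF y fa b])
  also have "(e \<cdot>\<^sub>v x) \<bullet> (f \<cdot>\<^sub>v a) = e * f * (x \<bullet> a)"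
    using x a by simp
  also have "(e \<cdot>\<^sub>v x) \<bullet> b = e * (x \<bullet> b)" using x b by simp
  also have "y \<bullet> (f \<cdot>\<^sub>v a) = f * (y \<bullet> a)" using y a by simp
  finally show ?thesis by simp
qed

lemma L_quad_expand:
  assumes x: "x \<in> carrier_vec d" and y: "y \<in> carrier_vec d"
  shows "(e \<cdot>\<^sub>v x + y) \<bullet> (Lmat S d *\<^sub>v (e \<cdot>\<^sub>v x + y)) =
    e^2 * (x \<bullet> (Lmat S d *\<^sub>v x)) + 2 * e * (x \<bullet> (Lmat S d *\<^sub>v y)) + y \<bullet> (Lmat S d *\<^sub>v y)"
proof -
  have "Lmat S d *\<^sub>v (e \<cdot>\<^sub>v x + y) = Lmat S d *\<^sub>v (e \<cdot>\<^sub>v x) + Lmat S d *\<^sub>v y"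
    by (rule mult_add_distrib_mat_vec[OF L_carrier]) (use x y in auto)
  also have "Lmat S d *\<^sub>v (e \<cdot>\<^sub>v x) = e \<cdot>\<^sub>v (Lmat S d *\<^sub>v x)"
    by (rule mult_mat_vec[OF L_carrier x])
  finally have 1: "Lmat S d *\<^sub>v (e \<cdot>\<^sub>v x + y) = e \<cdot>\<^sub>v (Lmat S d *\<^sub>v x) + Lmat S d *\<^sub>v y" .
  have 2: "y \<bullet> (Lmat S d *\<^sub>v x) = x \<bullet> (Lmat S d *\<^sub>v y)" using L_sym[OF y x] .
  show ?thesis unfolding 1 sp_expand[OF x y L_vec_carrier L_vec_carrier] 2
    by (simp add: power2_eq_square)
qed

lemma L_sq_bound:
  assumes S: "S > 0" and w: "w \<in> carrier_vec d"
  shows "(Lmat S d *\<^sub>v w) \<bullet> (Lmat S d *\<^sub>v w) \<le> 4 / (ds S d)^2 * (- (w \<bullet> (Lmat S d *\<^sub>v w)))"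
proof -
  define z where "z = Lmat S d *\<^sub>v w"
  define K where "K = 4 / (ds S d)^2"
  have K: "K > 0" using ds_pos[OF S, of d] by (simp add: K_def)
  have z: "z \<in> carrier_vec d" by (simp add: z_def)
  define e where "e = 1 / K"
  have e: "e > 0" using K by (simp add: e_def)
  have "0 \<le> - ((e \<cdot>\<^sub>v z + w) \<bullet> (Lmat S d *\<^sub>v (e \<cdot>\<^sub>v z + w)))"
    using L_psd[OF S] z w by simp
  also have "\<dots> = e^2 * (- (z \<bullet> (Lmat S d *\<^sub>v z))) - 2 * e * (z \<bullet> z) + (- (w \<bullet> (Lmat S d *\<^sub>v w)))"
  proof -
    have zz: "z \<bullet> (Lmat S d *\<^sub>v w) = z \<bullet> z" by (simp add: z_def)
    show ?thesis unfolding L_quad_expand[OF z w] zz by simp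
  qed
  finally have 1: "0 \<le> e^2 * (- (z \<bullet> (Lmat S d *\<^sub>v z))) - 2 * e * (z \<bullet> z) + (- (w \<bullet> (Lmat S d *\<^sub>v w)))" .
  have "e^2 * (- (z \<bullet> (Lmat S d *\<^sub>v z))) \<le> e^2 * (K * (z \<bullet> z))"
    using L_upper[OF S z] by (intro mult_left_mono) (auto simp: K_def)
  also have "\<dots> = e * (z \<bullet> z)" using K by (simp add: e_def power2_eq_square)
  finally have "0 \<le> - e * (z \<bullet> z) + (- (w \<bullet> (Lmat S d *\<^sub>v w)))" using 1 by linarith
  then have "e * (z \<bullet> z) \<le> - (w \<bullet> (Lmat S d *\<^sub>v w))" by linarith
  then have "z \<bullet> z \<le> K * (- (w \<bullet> (Lmat S d *\<^sub>v w)))" using K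
    by (simp add: e_def field_simps)
  then show ?thesis unfolding z_def K_def .
qed

lemma Linv_bounds:
  assumes S: "S > 0" and u: "u \<in> carrier_vec d"
  shows "0 \<le> - (u \<bullet> (Linv S d *\<^sub>v u))" "(omega1 S d)^2 * (- (u \<bullet> (Linv S d *\<^sub>v u))) \<le> u \<bullet> u"
proof -
  define y where "y = Linv S d *\<^sub>v u"
  define w where "w = (omega1 S d)^2"
  have y: "y \<in> carrier_vec d" using S by (simp add: y_def)
  have uy: "u = Lmat S d *\<^sub>v y" using L_Linv_vec[OF S u] by (simp add: y_def)
  have P: "- (u \<bullet> y) = - (y \<bullet> (Lmat S d *\<^sub>v y))"
    using uy comm_scalar_prod[of y d "Lmat S d *\<^sub>v y"] y by simp
  have co: "w * (y \<bullet> y) \<le> - (u \<bullet> y)" unfolding P w_def by (rule L_coercive[OF S y])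
  have w0: "w > 0" using omega1_pos[OF S, of d] by (simp add: w_def)
  show "0 \<le> - (u \<bullet> (Linv S d *\<^sub>v u))"
  proof -
    have "0 \<le> w * (y \<bullet> y)" using w0 sp_self_nonneg[of y] by simp
    then show ?thesis using co by (simp add: y_def)
  qed
  have "0 \<le> (u + w \<cdot>\<^sub>v y) \<bullet> (u + w \<cdot>\<^sub>v y)" by (rule sp_self_nonneg)
  also have "\<dots> = u \<bullet> u + 2 * w * (u \<bullet> y) + w^2 * (y \<bullet> y)"
  proof -
    have e: "u + w \<cdot>\<^sub>v y = w \<cdot>\<^sub>v y + u" by (rule comm_add_vec) (use u y in auto)
    show ?thesis unfolding e sp_expand[OF y u y u] using comm_scalar_prod[of y d u] u y
      by (simp add: power2_eq_square)
  qed
  finally have 1: "0 \<le> u \<bullet> u + 2 * w * (u \<bullet> y) + w^2 * (y \<bullet> y)" .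
  have "w^2 * (y \<bullet> y) \<le> w * (- (u \<bullet> y))"
    using mult_left_mono[OF co, of w] w0 by (simp add: power2_eq_square mult.assoc)
  with 1 have "w * (- (u \<bullet> y)) \<le> u \<bullet> u" by (simp add: algebra_simps)
  then show "(omega1 S d)^2 * (- (u \<bullet> (Linv S d *\<^sub>v u))) \<le> u \<bullet> u" by (simp add: w_def y_def)
qed


definition csf :: "real \<Rightarrow> real \<Rightarrow> real" where "csf c r = cos (c * r)"
definition snf :: "real \<Rightarrow> real \<Rightarrow> real" where "snf c r = (if c = 0 then r else sin (c * r) / c)"

lemma csf_fun: "csf c = (\<lambda>r. cos (c * r))" by (rule ext) (simp add: csf_def)

lemma csf_deriv: "(csf c has_real_derivative (-(c^2) * snf c r)) (at r)"
proof (cases "c = 0")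
  case True
  then have "csf c = (\<lambda>r. 1)" by (simp add: csf_fun)
  then show ?thesis using True by simp
next
  case False
  have "((\<lambda>r. cos (c * r)) has_real_derivative (- sin (c * r) * c)) (at r)"
    by (auto intro!: derivative_eq_intros)
  moreover have "- sin (c * r) * c = -(c^2) * snf c r" using False by (simp add: snf_def power2_eq_square)
  ultimately show ?thesis by (simp add: csf_fun)
qed

lemma snf_deriv: "(snf c has_real_derivative csf c r) (at r)"
proof (cases "c = 0")
  case True
  then have "snf c = (\<lambda>r. r)" by (rule_tac ext) (simp add: snf_def)
  then show ?thesis using True by (simp add: csf_def)
next
  case False
  then have e: "snf c = (\<lambda>r. sin (c * r) / c)" by (rule_tac ext) (simp add: snf_def)
  have "((\<lambda>r. sin (c * r) / c) has_real_derivative (cos (c * r) * c / c)) (at r)"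
    by (auto intro!: derivative_eq_intros)
  then show ?thesis using False by (simp add: csf_def e)
qed

lemma cs_sn_id: "(csf c r)^2 + c^2 * (snf c r)^2 = 1"
  by (cases "c = 0") (simp_all add: csf_def snf_def power_divide)

lemma csf0[simp]: "csf c 0 = 1" and snf0[simp]: "snf c 0 = 0" by (simp_all add: csf_def snf_def)

definition Kc :: "real \<Rightarrow> nat \<Rightarrow> real \<Rightarrow> real mat" where
  "Kc S d c = (1 - c^2) \<cdot>\<^sub>m Lmat S d - 1\<^sub>m d"

lemma Kc_carrier[simp]: "Kc S d c \<in> carrier_mat d d"
  unfolding Kc_def by (rule minus_carrier_mat) auto

lemma Kc_dims[simp]: "dim_row (Kc S d c) = d" "dim_col (Kc S d c) = d"
  using Kc_carrier[of S d c] by (simp_all only: carrier_matD)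

lemma Kc_vec_carrier[simp]: "Kc S d c *\<^sub>v v \<in> carrier_vec d"
  by (intro carrier_vecI) simp

lemma Linv_dimc[simp]: "S > 0 \<Longrightarrow> dim_col (Linv S d) = d"
  by (rule carrier_matD(2)[OF Linv_carrier])

lemma smult_mat_vec: "dim_vec v = dim_col A \<Longrightarrow> (k \<cdot>\<^sub>m A) *\<^sub>v v = k \<cdot>\<^sub>v (A *\<^sub>v (v :: real vec))"
  by (intro eq_vecI) (auto simp: scalar_prod_def sum_distrib_left mult.assoc)

lemma zero_mat_vec: "dim_vec v = m \<Longrightarrow> 0\<^sub>m n m *\<^sub>v (v :: real vec) = 0\<^sub>v n"
  by (intro eq_vecI) (auto simp: scalar_prod_def)

lemma Kc_vec: assumes "u \<in> carrier_vec d"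
  shows "Kc S d c *\<^sub>v u = (1 - c^2) \<cdot>\<^sub>v (Lmat S d *\<^sub>v u) - u"
proof -
  have "Kc S d c *\<^sub>v u = ((1 - c^2) \<cdot>\<^sub>m Lmat S d) *\<^sub>v u - 1\<^sub>m d *\<^sub>v u"
    unfolding Kc_def by (rule minus_mult_distrib_mat_vec) (use assms in auto)
  then show ?thesis using assms by (simp add: smult_mat_vec)
qed

lemma MB_carrier: "MB S d c \<in> carrier_mat (2*d) (2*d)"
  unfolding MB_def mult_2 by (rule four_block_carrier_mat) auto

lemma MA_carrier: "S > 0 \<Longrightarrow> MA S d c \<in> carrier_mat (2*d) (2*d)"
  unfolding MA_def mult_2 by (rule four_block_carrier_mat) (auto simp: Linv_carrier)

lemma MB_vec: assumes a: "a \<in> carrier_vec d" and b: "b \<in> carrier_vec d"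
  shows "MB S d c *\<^sub>v (a @\<^sub>v b) = 0\<^sub>v d @\<^sub>v (Kc S d c *\<^sub>v a)"
proof -
  have "MB S d c *\<^sub>v (a @\<^sub>v b) = (0\<^sub>m d d *\<^sub>v a + 0\<^sub>m d d *\<^sub>v b) @\<^sub>v (Kc S d c *\<^sub>v a + 0\<^sub>m d d *\<^sub>v b)"
    unfolding MB_def Kc_def[symmetric]
    by (rule four_block_mat_mult_vec) (use a b in auto)
  also have "\<dots> = 0\<^sub>v d @\<^sub>v (Kc S d c *\<^sub>v a)"
    using a b by (simp add: zero_mat_vec)
  finally show ?thesis .
qed

lemma MA_vec: assumes S: "S > 0" and a: "a \<in> carrier_vec d" and b: "b \<in> carrier_vec d"
  shows "MA S d c *\<^sub>v (a @\<^sub>v b) = (- (Linv S d *\<^sub>v b)) @\<^sub>v (c^2 \<cdot>\<^sub>v (Lmat S d *\<^sub>v a))"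
proof -
  have "MA S d c *\<^sub>v (a @\<^sub>v b) = (0\<^sub>m d d *\<^sub>v a + (- Linv S d) *\<^sub>v b) @\<^sub>v ((c^2 \<cdot>\<^sub>m Lmat S d) *\<^sub>v a + 0\<^sub>m d d *\<^sub>v b)"
    unfolding MA_def
    by (rule four_block_mat_mult_vec) (use a b S in \<open>auto simp: Linv_carrier\<close>)
  also have "\<dots> = (- (Linv S d *\<^sub>v b)) @\<^sub>v (c^2 \<cdot>\<^sub>v (Lmat S d *\<^sub>v a))"
    using a b S by (simp add: zero_mat_vec smult_mat_vec)
  finally show ?thesis .
qed

lemma append_sol:
  fixes U P U' P' :: "real \<Rightarrow> real vec"
  assumes U: "\<And>s. U s \<in> carrier_vec d" and P: "\<And>s. P s \<in> carrier_vec d"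
    and DU: "\<And>s i. i < d \<Longrightarrow> ((\<lambda>r. U r $ i) has_real_derivative U' s $ i) (at s)"
    and DP: "\<And>s i. i < d \<Longrightarrow> ((\<lambda>r. P r $ i) has_real_derivative P' s $ i) (at s)"
    and M: "\<And>s. M *\<^sub>v (U s @\<^sub>v P s) = U' s @\<^sub>v P' s"
    and U': "\<And>s. U' s \<in> carrier_vec d" and P': "\<And>s. P' s \<in> carrier_vec d"
  shows "\<forall>s. \<forall>i<2*d. ((\<lambda>r. (U r @\<^sub>v P r) $ i) has_real_derivative (M *\<^sub>v (U s @\<^sub>v P s)) $ i) (at s)"
proof (intro allI impI)
  fix s i assume i: "i < 2 * d"
  have dU: "dim_vec (U r) = d" for r using U[of r] by auto
  have dP: "dim_vec (P r) = d" for r using P[of r] by auto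
  have dU': "dim_vec (U' r) = d" for r using U'[of r] by auto
  have dP': "dim_vec (P' r) = d" for r using P'[of r] by auto
  have e: "(\<lambda>r. (U r @\<^sub>v P r) $ i) = (\<lambda>r. if i < d then U r $ i else P r $ (i - d))"
    using i dU dP by (auto simp: mult_2)
  have e2: "(M *\<^sub>v (U s @\<^sub>v P s)) $ i = (if i < d then U' s $ i else P' s $ (i - d))"
    unfolding M using i dU' dP' by (auto simp: mult_2)
  show "((\<lambda>r. (U r @\<^sub>v P r) $ i) has_real_derivative (M *\<^sub>v (U s @\<^sub>v P s)) $ i) (at s)"
    unfolding e e2 using DU DP i by (cases "i < d") auto
qed

lemma flowB_eq:
  assumes u: "u \<in> carrier_vec d" and p: "p \<in> carrier_vec d" and t: "0 \<le> t"
  shows "lin_flow (2*d) (MB S d c) t (u @\<^sub>v p) = u @\<^sub>v (p + t \<cdot>\<^sub>v (Kc S d c *\<^sub>v u))"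
proof -
  define k where "k = Kc S d c *\<^sub>v u"
  have k: "k \<in> carrier_vec d" by (simp add: k_def carrier_vecI)
  define X where "X s = u @\<^sub>v (p + s \<cdot>\<^sub>v k)" for s
  have X0: "X 0 = u @\<^sub>v p" unfolding X_def using p k by (intro arg_cong[where f = "\<lambda>x. u @\<^sub>v x"] eq_vecI) auto
  have "lin_flow (2*d) (MB S d c) t (X 0) = X t"
  proof (rule lin_flow_eq[OF MB_carrier t])
    show "\<forall>s. dim_vec (X s) = 2 * d" using u p k by (simp add: X_def mult_2)
    show "\<forall>s. \<forall>i<2 * d. ((\<lambda>r. X r $ i) has_real_derivative (MB S d c *\<^sub>v X s) $ i) (at s)"
      unfolding X_def
    proof (rule append_sol[where U' = "\<lambda>s. 0\<^sub>v d" and P' = "\<lambda>s. k"])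
      show "\<And>s. u \<in> carrier_vec d" using u .
      show "\<And>s. p + s \<cdot>\<^sub>v k \<in> carrier_vec d" using p k by auto
      show "\<And>s i. i < d \<Longrightarrow> ((\<lambda>r. u $ i) has_real_derivative 0\<^sub>v d $ i) (at s)" by auto
      show "\<And>s i. i < d \<Longrightarrow> ((\<lambda>r. (p + r \<cdot>\<^sub>v k) $ i) has_real_derivative k $ i) (at s)"
      proof -
        fix s i assume i: "i < d"
        have "(\<lambda>r. (p + r \<cdot>\<^sub>v k) $ i) = (\<lambda>r. p $ i + r * k $ i)" using i p k by auto
        moreover have "((\<lambda>r. p $ i + r * k $ i) has_real_derivative k $ i) (at s)"
          by (auto intro!: derivative_eq_intros)
        ultimately show "((\<lambda>r. (p + r \<cdot>\<^sub>v k) $ i) has_real_derivative k $ i) (at s)" by simp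
      qed
      show "\<And>s. MB S d c *\<^sub>v (u @\<^sub>v (p + s \<cdot>\<^sub>v k)) = 0\<^sub>v d @\<^sub>v k"
        using MB_vec[OF u, of _ S c] p k by (simp add: k_def)
    qed (use k in auto)
  qed
  from this[unfolded X0] show ?thesis by (simp only: X_def k_def)
qed

lemma flowA_eq:
  assumes S: "S > 0" and u: "u \<in> carrier_vec d" and p: "p \<in> carrier_vec d" and t: "0 \<le> t"
  shows "lin_flow (2*d) (MA S d c) t (u @\<^sub>v p) =
     (csf c t \<cdot>\<^sub>v u - snf c t \<cdot>\<^sub>v (Linv S d *\<^sub>v p)) @\<^sub>v ((c^2 * snf c t) \<cdot>\<^sub>v (Lmat S d *\<^sub>v u) + csf c t \<cdot>\<^sub>v p)"
proof -
  define w where "w = Linv S d *\<^sub>v p"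
  define l where "l = Lmat S d *\<^sub>v u"
  have w: "w \<in> carrier_vec d" and l: "l \<in> carrier_vec d" using S by (auto simp: w_def l_def)
  define U where "U s = csf c s \<cdot>\<^sub>v u - snf c s \<cdot>\<^sub>v w" for s
  define P where "P s = (c^2 * snf c s) \<cdot>\<^sub>v l + csf c s \<cdot>\<^sub>v p" for s
  define U' where "U' s = (-(c^2) * snf c s) \<cdot>\<^sub>v u - csf c s \<cdot>\<^sub>v w" for s
  define P' where "P' s = (c^2 * csf c s) \<cdot>\<^sub>v l + (-(c^2) * snf c s) \<cdot>\<^sub>v p" for s
  have Uc: "U s \<in> carrier_vec d" for s using u w by (auto simp: U_def)
  have Pc: "P s \<in> carrier_vec d" for s using l p by (auto simp: P_def)
  have X0: "U 0 @\<^sub>v P 0 = u @\<^sub>v p"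
  proof -
    have "U 0 = u" using u w by (intro eq_vecI) (auto simp: U_def)
    moreover have "P 0 = p" using l p by (intro eq_vecI) (auto simp: P_def)
    ultimately show ?thesis by simp
  qed
  have "lin_flow (2*d) (MA S d c) t (U 0 @\<^sub>v P 0) = U t @\<^sub>v P t"
  proof (rule lin_flow_eq[OF MA_carrier[OF S] t, where X = "\<lambda>s. U s @\<^sub>v P s"])
    have "dim_vec (U s) = d" "dim_vec (P s) = d" for s using Uc[of s] Pc[of s] by auto
    then show "\<forall>s. dim_vec (U s @\<^sub>v P s) = 2 * d" by (simp add: mult_2)
    show "\<forall>s. \<forall>i<2 * d. ((\<lambda>r. (U r @\<^sub>v P r) $ i) has_real_derivative (MA S d c *\<^sub>v (U s @\<^sub>v P s)) $ i) (at s)"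
    proof (rule append_sol[where U' = U' and P' = P'])
      show "\<And>s. U s \<in> carrier_vec d" "\<And>s. P s \<in> carrier_vec d" by (rule Uc, rule Pc)
      show "\<And>s. U' s \<in> carrier_vec d" "\<And>s. P' s \<in> carrier_vec d" using u w l p by (auto simp: U'_def P'_def)
      show "\<And>s i. i < d \<Longrightarrow> ((\<lambda>r. U r $ i) has_real_derivative U' s $ i) (at s)"
      proof -
        fix s i assume i: "i < d"
        have "(\<lambda>r. U r $ i) = (\<lambda>r. csf c r * u $ i - snf c r * w $ i)" using i u w by (auto simp: U_def)
        moreover have "((\<lambda>r. csf c r * u $ i - snf c r * w $ i) has_real_derivative
            (-(c^2) * snf c s) * u $ i - csf c s * w $ i) (at s)"
          by (auto intro!: derivative_eq_intros csf_deriv snf_deriv)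
        moreover have "U' s $ i = (-(c^2) * snf c s) * u $ i - csf c s * w $ i"
          using i u w by (simp add: U'_def)
        ultimately show "((\<lambda>r. U r $ i) has_real_derivative U' s $ i) (at s)" by simp
      qed
      show "\<And>s i. i < d \<Longrightarrow> ((\<lambda>r. P r $ i) has_real_derivative P' s $ i) (at s)"
      proof -
        fix s i assume i: "i < d"
        have "(\<lambda>r. P r $ i) = (\<lambda>r. c^2 * snf c r * l $ i + csf c r * p $ i)" using i l p by (auto simp: P_def)
        moreover have "((\<lambda>r. c^2 * snf c r * l $ i + csf c r * p $ i) has_real_derivative
            (c^2 * csf c s) * l $ i + (-(c^2) * snf c s) * p $ i) (at s)"
          by (auto intro!: derivative_eq_intros csf_deriv snf_deriv)
        moreover have "P' s $ i = (c^2 * csf c s) * l $ i + (-(c^2) * snf c s) * p $ i"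
          using i l p by (simp add: P'_def)
        ultimately show "((\<lambda>r. P r $ i) has_real_derivative P' s $ i) (at s)" by simp
      qed
      show "\<And>s. MA S d c *\<^sub>v (U s @\<^sub>v P s) = U' s @\<^sub>v P' s"
      proof -
        fix s
        have "MA S d c *\<^sub>v (U s @\<^sub>v P s) = (- (Linv S d *\<^sub>v P s)) @\<^sub>v (c^2 \<cdot>\<^sub>v (Lmat S d *\<^sub>v U s))"
          by (rule MA_vec[OF S Uc Pc])
        also have "Linv S d *\<^sub>v P s = (c^2 * snf c s) \<cdot>\<^sub>v u + csf c s \<cdot>\<^sub>v w"
        proof -
          have "Linv S d *\<^sub>v P s = Linv S d *\<^sub>v ((c^2 * snf c s) \<cdot>\<^sub>v l) + Linv S d *\<^sub>v (csf c s \<cdot>\<^sub>v p)"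
            unfolding P_def by (rule mult_add_distrib_mat_vec[OF Linv_carrier[OF S]]) (use l p in auto)
          also have "\<dots> = (c^2 * snf c s) \<cdot>\<^sub>v (Linv S d *\<^sub>v l) + csf c s \<cdot>\<^sub>v w"
            using mult_mat_vec[OF Linv_carrier[OF S] l] mult_mat_vec[OF Linv_carrier[OF S] p] by (simp add: w_def)
          also have "Linv S d *\<^sub>v l = u" unfolding l_def by (rule Linv_L_vec[OF S u])
          finally show ?thesis .
        qed
        also have "Lmat S d *\<^sub>v U s = csf c s \<cdot>\<^sub>v l - snf c s \<cdot>\<^sub>v p"
        proof -
          have "Lmat S d *\<^sub>v U s = Lmat S d *\<^sub>v (csf c s \<cdot>\<^sub>v u) - Lmat S d *\<^sub>v (snf c s \<cdot>\<^sub>v w)"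
            unfolding U_def by (rule mult_minus_distrib_mat_vec[OF L_carrier]) (use u w in auto)
          also have "\<dots> = csf c s \<cdot>\<^sub>v l - snf c s \<cdot>\<^sub>v (Lmat S d *\<^sub>v w)"
            using mult_mat_vec[OF L_carrier u] mult_mat_vec[OF L_carrier w] by (simp add: l_def)
          also have "Lmat S d *\<^sub>v w = p" unfolding w_def by (rule L_Linv_vec[OF S p])
          finally show ?thesis .
        qed
        also have "(- ((c^2 * snf c s) \<cdot>\<^sub>v u + csf c s \<cdot>\<^sub>v w)) = U' s"
          using u w by (intro eq_vecI) (auto simp: U'_def)
        also have "c^2 \<cdot>\<^sub>v (csf c s \<cdot>\<^sub>v l - snf c s \<cdot>\<^sub>v p) = P' s"
          using l p by (intro eq_vecI) (auto simp: P'_def algebra_simps)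
        finally show "MA S d c *\<^sub>v (U s @\<^sub>v P s) = U' s @\<^sub>v P' s" .
      qed
    qed
  qed
  from this[unfolded X0] show ?thesis by (simp only: U_def P_def w_def l_def)
qed


lemma trig_key:
  fixes x \<theta> :: real
  assumes x: "0 < x" and th: "0 \<le> \<theta>" "\<theta> < pi / 2" and sum: "x + 2 * \<theta> < pi"
  shows "\<bar>cos x - tan \<theta> * sin x\<bar> < 1"
proof -
  have c: "cos \<theta> > 0" using th by (intro cos_gt_zero_pi) auto
  have e: "cos x - tan \<theta> * sin x = cos (x + \<theta>) / cos \<theta>"
    using c by (simp add: cos_add tan_def field_simps)
  have 1: "cos (x + \<theta>) < cos \<theta>"
    by (rule cos_monotone_0_pi) (use x th sum in auto)
  have 2: "cos (pi - \<theta>) < cos (x + \<theta>)"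
    by (rule cos_monotone_0_pi) (use x th sum in auto)
  then have "- cos \<theta> < cos (x + \<theta>)" by simp
  with 1 c show ?thesis unfolding e by (simp add: abs_less_iff field_simps)
qed

lemma arctan_nn: "0 \<le> T \<Longrightarrow> 0 \<le> arctan T" using arctan_monotone'[of 0 T] by simp

lemma trig_key2:
  fixes x T :: real
  assumes x: "0 < x" and T: "0 \<le> T" and sum: "x + 2 * arctan T < pi"
  shows "\<bar>cos x - T * sin x\<bar> < 1"
proof -
  have "\<bar>cos x - tan (arctan T) * sin x\<bar> < 1"
    by (rule trig_key[OF x]) (use T sum arctan_ubound in \<open>auto simp: arctan_nn\<close>)
  then show ?thesis by (simp add: tan_arctan)
qed

lemma scalar_conds:
  fixes c h om :: real
  assumes c0: "0 \<le> c" and c1: "c \<le> 1" and h: "h > 0" and om: "om > 0"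
    and hp: "c > 0 \<Longrightarrow> c * h + 2 * arctan (h * (1 + (1 - c^2) * om^2) / (2 * c * om^2)) < pi"
    and hz: "c = 0 \<Longrightarrow> h < 2 * om / sqrt (1 + om^2)"
  shows "snf c h > 0" "\<bar>csf c h - h / 2 * snf c h * (1 - c^2)\<bar> \<le> 1"
    "\<bar>csf c h - h / 2 * snf c h * (1 - c^2 + 1 / om^2)\<bar> < 1"
proof -
  have all: "snf c h > 0 \<and> \<bar>csf c h - h / 2 * snf c h * (1 - c^2)\<bar> \<le> 1 \<and>
    \<bar>csf c h - h / 2 * snf c h * (1 - c^2 + 1 / om^2)\<bar> < 1"
  proof (cases "c = 0")
    case True
    have hl: "h < 2 * om / sqrt (1 + om^2)" using hz True by simp
    have pos1: "0 < 1 + om^2" using zero_le_power2[of om] by linarith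
    then have sq: "sqrt (1 + om^2) > 0" by simp
    have "h * sqrt (1 + om^2) < 2 * om" using hl sq by (simp add: field_simps)
    then have "(h * sqrt (1 + om^2))^2 < (2 * om)^2"
      using h sq by (intro power_strict_mono) auto
    then have hs: "h^2 * (1 + om^2) < 4 * om^2" by (simp add: power_mult_distrib)
    have "h^2 * (1 + om^2) < 4 * (1 + om^2)" using hs by simp
    then have h2: "h^2 < 4" using pos1 mult_less_cancel_right_pos[of "1 + om^2" "h^2" 4] by simp
    have h3: "h^2 * (1 + 1 / om^2) < 4"
    proof -
      have "h^2 * (1 + 1 / om^2) = h^2 * (1 + om^2) / om^2" using om by (simp add: field_simps)
      also have "\<dots> < 4 * om^2 / om^2" using hs om by (intro divide_strict_right_mono) auto
      finally show ?thesis using om by simp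
    qed
    have p1: "0 < h^2 * (1 + 1 / om^2)" using h om by (intro mult_pos_pos) (auto intro: add_pos_pos)
    have r1: "h / 2 * snf c h * (1 - c^2) = h^2/2" using True by (simp add: snf_def power2_eq_square)
    have r2: "h / 2 * snf c h * (1 - c^2 + 1/om^2) = h^2 * (1 + 1/om^2) / 2"
      using True by (simp add: snf_def power2_eq_square)
    have r3: "csf c h = 1" "snf c h = h" using True by (simp_all add: csf_def snf_def)
    have "0 \<le> h^2" by simp
    then show ?thesis unfolding r1 r2 unfolding r3 using h h2 h3 p1 by (simp add: abs_le_iff abs_less_iff)
  next
    case False
    then have c: "c > 0" using c0 by simp
    define x where "x = c * h"
    have x: "0 < x" using c h by (simp add: x_def)
    define T1 where "T1 = h * (1 - c^2 + 1 / om^2) / (2 * c)"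
    define T0 where "T0 = h * (1 - c^2) / (2 * c)"
    have c2: "c^2 \<le> 1" using c0 c1 by (simp add: power_le_one)
    have T0: "0 \<le> T0" using c h c2 by (simp add: T0_def)
    have T01: "T0 \<le> T1" using c h om by (simp add: T0_def T1_def divide_right_mono)
    have T1: "0 \<le> T1" using T0 T01 by simp
    have eqT: "h * (1 + (1 - c^2) * om^2) / (2 * c * om^2) = T1"
      using c om by (simp add: T1_def field_simps)
    have sum1: "x + 2 * arctan T1 < pi" using hp[OF c] unfolding eqT x_def by simp
    have sum0: "x + 2 * arctan T0 < pi" using sum1 arctan_monotone'[OF T01] by simp
    have sinx: "sin x > 0"
    proof (rule sin_gt_zero[OF x])
      show "x < pi" using sum0 arctan_nn[OF T0] by linarith
    qed
    have s: "snf c h = sin x / c" using False by (simp add: snf_def x_def)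
    have C: "csf c h = cos x" by (simp add: csf_def x_def)
    have e0: "h / 2 * snf c h * (1 - c^2) = T0 * sin x" using c by (simp add: s T0_def field_simps)
    have e1: "h / 2 * snf c h * (1 - c^2 + 1 / om^2) = T1 * sin x" using c by (simp add: s T1_def field_simps)
    show ?thesis unfolding e0 e1 C
      using trig_key2[OF x T0 sum0] trig_key2[OF x T1 sum1] sinx c s by simp
  qed
  then show "snf c h > 0" "\<bar>csf c h - h / 2 * snf c h * (1 - c^2)\<bar> \<le> 1"
    "\<bar>csf c h - h / 2 * snf c h * (1 - c^2 + 1 / om^2)\<bar> < 1" by auto
qed


definition En :: "real \<Rightarrow> nat \<Rightarrow> real \<Rightarrow> real \<Rightarrow> real \<Rightarrow> real \<Rightarrow> real vec \<Rightarrow> real vec \<Rightarrow> real" where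
  "En S d be al ga q u p = - be * (u \<bullet> (Lmat S d *\<^sub>v u)) + al * (u \<bullet> u) + ga * (u \<bullet> (Linv S d *\<^sub>v u))
     - q * ((Linv S d *\<^sub>v p) \<bullet> (Lmat S d *\<^sub>v (Linv S d *\<^sub>v p)))"

definition Fn :: "real \<Rightarrow> nat \<Rightarrow> real \<Rightarrow> real \<Rightarrow> real \<Rightarrow> real \<Rightarrow> real \<Rightarrow> real \<Rightarrow> real vec \<Rightarrow> real vec \<Rightarrow> real" where
  "Fn S d be al ga q a \<tau> u w = - (be + q * \<tau>^2 * a^2) * (u \<bullet> (Lmat S d *\<^sub>v u)) + (al + 2 * q * \<tau>^2 * a) * (u \<bullet> u)
     + (ga - q * \<tau>^2) * (u \<bullet> (Linv S d *\<^sub>v u)) - q * (w \<bullet> (Lmat S d *\<^sub>v w))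
     - 2 * q * \<tau> * (a * (w \<bullet> (Lmat S d *\<^sub>v u)) - w \<bullet> u)"

lemma sp2:
  fixes x y a b :: "real vec"
  assumes x: "x \<in> carrier_vec d" and y: "y \<in> carrier_vec d"
    and a: "a \<in> carrier_vec d" and b: "b \<in> carrier_vec d"
  shows "(e1 \<cdot>\<^sub>v x + e2 \<cdot>\<^sub>v y) \<bullet> (f1 \<cdot>\<^sub>v a + f2 \<cdot>\<^sub>v b) =
    e1 * f1 * (x \<bullet> a) + e1 * f2 * (x \<bullet> b) + e2 * f1 * (y \<bullet> a) + e2 * f2 * (y \<bullet> b)"
proof -
  have y2: "e2 \<cdot>\<^sub>v y \<in> carrier_vec d" and b2: "f2 \<cdot>\<^sub>v b \<in> carrier_vec d" using y b by auto
  have "(e1 \<cdot>\<^sub>v x + e2 \<cdot>\<^sub>v y) \<bullet> (f1 \<cdot>\<^sub>v a + f2 \<cdot>\<^sub>v b) =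
     e1 * f1 * (x \<bullet> a) + e1 * (x \<bullet> (f2 \<cdot>\<^sub>v b)) + f1 * ((e2 \<cdot>\<^sub>v y) \<bullet> a) + (e2 \<cdot>\<^sub>v y) \<bullet> (f2 \<cdot>\<^sub>v b)"
    by (rule sp_expand[OF x y2 a b2])
  also have "\<dots> = e1 * f1 * (x \<bullet> a) + e1 * f2 * (x \<bullet> b) + e2 * f1 * (y \<bullet> a) + e2 * f2 * (y \<bullet> b)"
    using x y a b by simp
  finally show ?thesis .
qed

lemma mv2:
  fixes A :: "real mat"
  assumes A: "A \<in> carrier_mat d d" and a: "a \<in> carrier_vec d" and b: "b \<in> carrier_vec d"
  shows "A *\<^sub>v (f1 \<cdot>\<^sub>v a + f2 \<cdot>\<^sub>v b) = f1 \<cdot>\<^sub>v (A *\<^sub>v a) + f2 \<cdot>\<^sub>v (A *\<^sub>v b)"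
proof -
  have "A *\<^sub>v (f1 \<cdot>\<^sub>v a + f2 \<cdot>\<^sub>v b) = A *\<^sub>v (f1 \<cdot>\<^sub>v a) + A *\<^sub>v (f2 \<cdot>\<^sub>v b)"
    by (rule mult_add_distrib_mat_vec[OF A]) (use a b in auto)
  then show ?thesis using mult_mat_vec[OF A a] mult_mat_vec[OF A b] by simp
qed

lemma Bstep:
  assumes S: "S > 0" and u: "u \<in> carrier_vec d" and p: "p \<in> carrier_vec d"
  shows "En S d be al ga q u (p + \<tau> \<cdot>\<^sub>v (Kc S d c *\<^sub>v u)) = Fn S d be al ga q (1 - c^2) \<tau> u (Linv S d *\<^sub>v p)"
proof -
  define a where "a = 1 - c^2"
  define L where "L = Lmat S d"
  define N where "N = Linv S d"
  have Lc: "L \<in> carrier_mat d d" and Nc: "N \<in> carrier_mat d d" using S by (auto simp: L_def N_def Linv_carrier)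
  define w where "w = N *\<^sub>v p"
  define v where "v = N *\<^sub>v u"
  have w: "w \<in> carrier_vec d" and v: "v \<in> carrier_vec d" using S by (auto simp: w_def v_def N_def)
  have Lu: "L *\<^sub>v u \<in> carrier_vec d" by (simp add: L_def)
  define z where "z = a \<cdot>\<^sub>v u + (-1) \<cdot>\<^sub>v v"
  have z: "z \<in> carrier_vec d" using u v by (simp add: z_def)
  have Ku: "Kc S d c *\<^sub>v u = a \<cdot>\<^sub>v (L *\<^sub>v u) + (-1) \<cdot>\<^sub>v u"
    using Kc_vec[OF u, of S c] u by (intro eq_vecI) (auto simp: a_def L_def)
  have Lv: "L *\<^sub>v v = u" using L_Linv_vec[OF S u] by (simp add: L_def v_def N_def)
  have NL: "N *\<^sub>v (L *\<^sub>v u) = u" using Linv_L_vec[OF S u] by (simp add: L_def N_def)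
  have "N *\<^sub>v (p + \<tau> \<cdot>\<^sub>v (Kc S d c *\<^sub>v u)) = N *\<^sub>v p + N *\<^sub>v (\<tau> \<cdot>\<^sub>v (Kc S d c *\<^sub>v u))"
    by (rule mult_add_distrib_mat_vec[OF Nc]) (use p in auto)
  also have "N *\<^sub>v (\<tau> \<cdot>\<^sub>v (Kc S d c *\<^sub>v u)) = \<tau> \<cdot>\<^sub>v z"
  proof -
    have "N *\<^sub>v (\<tau> \<cdot>\<^sub>v (Kc S d c *\<^sub>v u)) = \<tau> \<cdot>\<^sub>v (N *\<^sub>v (Kc S d c *\<^sub>v u))"
      by (rule mult_mat_vec[OF Nc]) simp
    also have "N *\<^sub>v (Kc S d c *\<^sub>v u) = a \<cdot>\<^sub>v u + (-1) \<cdot>\<^sub>v v"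
      unfolding Ku mv2[OF Nc Lu u] NL v_def ..
    finally show ?thesis by (simp add: z_def)
  qed
  finally have w': "N *\<^sub>v (p + \<tau> \<cdot>\<^sub>v (Kc S d c *\<^sub>v u)) = \<tau> \<cdot>\<^sub>v z + w"
    using z w by (simp add: w_def comm_add_vec)
  have Lz: "L *\<^sub>v z = a \<cdot>\<^sub>v (L *\<^sub>v u) + (-1) \<cdot>\<^sub>v u"
    unfolding z_def mv2[OF Lc u v] Lv ..
  have Lsym: "x \<bullet> (L *\<^sub>v y) = y \<bullet> (L *\<^sub>v x)" if "x \<in> carrier_vec d" "y \<in> carrier_vec d" for x y
    using L_sym[OF that] by (simp add: L_def)
  have zLz: "z \<bullet> (L *\<^sub>v z) = a^2 * (u \<bullet> (L *\<^sub>v u)) - 2 * a * (u \<bullet> u) + u \<bullet> v"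
  proof -
    have "z \<bullet> (L *\<^sub>v z) = a * a * (u \<bullet> (L *\<^sub>v u)) + a * (-1) * (u \<bullet> u) + (-1) * a * (v \<bullet> (L *\<^sub>v u)) + (-1) * (-1) * (v \<bullet> u)"
      unfolding Lz unfolding z_def by (rule sp2[OF u v Lu u])
    moreover have "v \<bullet> (L *\<^sub>v u) = u \<bullet> u" using Lsym[OF v u] Lv by simp
    moreover have "v \<bullet> u = u \<bullet> v" by (rule comm_scalar_prod[OF v u])
    ultimately show ?thesis by (simp add: power2_eq_square)
  qed
  have zLw: "z \<bullet> (L *\<^sub>v w) = a * (w \<bullet> (L *\<^sub>v u)) - w \<bullet> u"
  proof -
    have "z \<bullet> (L *\<^sub>v w) = w \<bullet> (L *\<^sub>v z)" by (rule Lsym[OF z w])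
    also have "\<dots> = w \<bullet> (a \<cdot>\<^sub>v (L *\<^sub>v u)) + w \<bullet> ((-1) \<cdot>\<^sub>v u)"
      unfolding Lz by (rule scalar_prod_add_distrib[OF w]) (use u Lu in auto)
    also have "\<dots> = a * (w \<bullet> (L *\<^sub>v u)) - w \<bullet> u" using w u Lu by simp
    finally show ?thesis .
  qed
  have "En S d be al ga q u (p + \<tau> \<cdot>\<^sub>v (Kc S d c *\<^sub>v u)) =
     - be * (u \<bullet> (L *\<^sub>v u)) + al * (u \<bullet> u) + ga * (u \<bullet> v)
     - q * ((\<tau> \<cdot>\<^sub>v z + w) \<bullet> (L *\<^sub>v (\<tau> \<cdot>\<^sub>v z + w)))"
    unfolding En_def w'[unfolded N_def L_def] by (simp add: L_def v_def N_def)
  also have "(\<tau> \<cdot>\<^sub>v z + w) \<bullet> (L *\<^sub>v (\<tau> \<cdot>\<^sub>v z + w)) =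
      \<tau>^2 * (z \<bullet> (L *\<^sub>v z)) + 2 * \<tau> * (z \<bullet> (L *\<^sub>v w)) + w \<bullet> (L *\<^sub>v w)"
    unfolding L_def by (rule L_quad_expand[OF z w])
  finally show ?thesis unfolding zLz zLw Fn_def unfolding a_def
    by (simp add: L_def N_def v_def w_def algebra_simps power2_eq_square)
qed

lemma diff_zero: "(x::real) - y = (1 - X) * Z \<Longrightarrow> X = 1 \<Longrightarrow> x = y" by simp

lemma Astep:
  assumes S: "S > 0" and u: "u \<in> carrier_vec d" and w: "w \<in> carrier_vec d"
    and id: "C^2 + k * s^2 = 1"
    and q: "q = s" and ga: "ga = s * t^2" and be: "be = k * s + 2 * C * t * a - s * t^2 * a^2"
    and al: "al = 2 * t * C - 2 * s * t^2 * a"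
  shows "Fn S d be al ga q a t (C \<cdot>\<^sub>v u + (-s) \<cdot>\<^sub>v w) ((k * s) \<cdot>\<^sub>v u + C \<cdot>\<^sub>v w) = Fn S d be al ga q a (-t) u w"
proof -
  define L where "L = Lmat S d"
  have Lc: "L \<in> carrier_mat d d" by (simp add: L_def)
  have Lu: "L *\<^sub>v u \<in> carrier_vec d" and Lw: "L *\<^sub>v w \<in> carrier_vec d" by (simp_all add: L_def)
  have Lsym: "x \<bullet> (L *\<^sub>v y) = y \<bullet> (L *\<^sub>v x)" if "x \<in> carrier_vec d" "y \<in> carrier_vec d" for x y
    using L_sym[OF that] by (simp add: L_def)
  have s1: "w \<bullet> (L *\<^sub>v u) = u \<bullet> (L *\<^sub>v w)" by (rule Lsym[OF w u])
  have s2: "w \<bullet> u = u \<bullet> w" by (rule comm_scalar_prod[OF w u])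
  let ?u' = "C \<cdot>\<^sub>v u + (-s) \<cdot>\<^sub>v w" and ?w' = "(k * s) \<cdot>\<^sub>v u + C \<cdot>\<^sub>v w"
  have Lu': "L *\<^sub>v ?u' = C \<cdot>\<^sub>v (L *\<^sub>v u) + (-s) \<cdot>\<^sub>v (L *\<^sub>v w)" by (rule mv2[OF Lc u w])
  have Lw': "L *\<^sub>v ?w' = (k * s) \<cdot>\<^sub>v (L *\<^sub>v u) + C \<cdot>\<^sub>v (L *\<^sub>v w)" by (rule mv2[OF Lc u w])
  have e1: "?u' \<bullet> (L *\<^sub>v ?u') = C * C * (u \<bullet> (L *\<^sub>v u)) + C * (-s) * (u \<bullet> (L *\<^sub>v w)) + (-s) * C * (w \<bullet> (L *\<^sub>v u)) + (-s) * (-s) * (w \<bullet> (L *\<^sub>v w))"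
    unfolding Lu' by (rule sp2[OF u w Lu Lw])
  have e2: "?u' \<bullet> ?u' = C * C * (u \<bullet> u) + C * (-s) * (u \<bullet> w) + (-s) * C * (w \<bullet> u) + (-s) * (-s) * (w \<bullet> w)"
    by (rule sp2[OF u w u w])
  have e3: "?w' \<bullet> (L *\<^sub>v ?w') = (k*s) * (k*s) * (u \<bullet> (L *\<^sub>v u)) + (k*s) * C * (u \<bullet> (L *\<^sub>v w)) + C * (k*s) * (w \<bullet> (L *\<^sub>v u)) + C * C * (w \<bullet> (L *\<^sub>v w))"
    unfolding Lw' by (rule sp2[OF u w Lu Lw])
  have e4: "?w' \<bullet> (L *\<^sub>v ?u') = (k*s) * C * (u \<bullet> (L *\<^sub>v u)) + (k*s) * (-s) * (u \<bullet> (L *\<^sub>v w)) + C * C * (w \<bullet> (L *\<^sub>v u)) + C * (-s) * (w \<bullet> (L *\<^sub>v w))"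
    unfolding Lu' by (rule sp2[OF u w Lu Lw])
  have e5: "?w' \<bullet> ?u' = (k*s) * C * (u \<bullet> u) + (k*s) * (-s) * (u \<bullet> w) + C * C * (w \<bullet> u) + C * (-s) * (w \<bullet> w)"
    by (rule sp2[OF u w u w])
  have g: "ga - q * t^2 = 0" "ga - q * (-t)^2 = 0" using q ga by simp_all
  have C2: "C^2 = 1 - k * s^2" using id by simp
  show ?thesis
    unfolding Fn_def g unfolding L_def[symmetric] e1 e2 e3 e4 e5 s1 s2 unfolding q be al
    apply (rule diff_zero[where X = "C*C + k*(s*s)" and
       Z = "s * (u \<bullet> (L *\<^sub>v w) * 0 + w \<bullet> (L *\<^sub>v w)) - 2*t*C*(u \<bullet> u) + (k*s + 2*C*a*t)*(u \<bullet> (L *\<^sub>v u)) + 2*s*t*(u \<bullet> w) - 2*a*s*t*(u \<bullet> (L *\<^sub>v w))"])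
     apply (simp add: algebra_simps power2_eq_square)
    using id by (simp add: power2_eq_square)
qed


lemma first_last_append:
  assumes u: "u \<in> carrier_vec d" and p: "(p :: real vec) \<in> carrier_vec d"
  shows "vec_first (u @\<^sub>v p) d = u" "vec_last (u @\<^sub>v p) d = p"
  using u p by (auto intro!: eq_vecI simp: vec_first_def vec_last_def)

lemma minus_smult_conv:
  assumes "x \<in> carrier_vec d" "(y :: real vec) \<in> carrier_vec d"
  shows "e \<cdot>\<^sub>v x - f \<cdot>\<^sub>v y = e \<cdot>\<^sub>v x + (-f) \<cdot>\<^sub>v y"
  using assms by (intro eq_vecI) auto

lemma strang_step:
  fixes c :: real
  assumes S: "S > 0" and h: "h > 0" and u: "u \<in> carrier_vec d" and p: "p \<in> carrier_vec d"
  defines "p1 \<equiv> p + (h/2) \<cdot>\<^sub>v (Kc S d c *\<^sub>v u)"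
  defines "u2 \<equiv> csf c h \<cdot>\<^sub>v u - snf c h \<cdot>\<^sub>v (Linv S d *\<^sub>v p1)"
  defines "p2 \<equiv> (c^2 * snf c h) \<cdot>\<^sub>v (Lmat S d *\<^sub>v u) + csf c h \<cdot>\<^sub>v p1"
  shows "strang S d c h (u @\<^sub>v p) = u2 @\<^sub>v (p2 + (h/2) \<cdot>\<^sub>v (Kc S d c *\<^sub>v u2))"
proof -
  have p1: "p1 \<in> carrier_vec d" using p by (simp add: p1_def)
  have u2: "u2 \<in> carrier_vec d" using u S by (simp add: u2_def)
  have p2: "p2 \<in> carrier_vec d" using p1 by (simp add: p2_def)
  have "strang S d c h (u @\<^sub>v p) =
     lin_flow (2 * d) (MB S d c) (h / 2) (lin_flow (2 * d) (MA S d c) h (lin_flow (2 * d) (MB S d c) (h / 2) (u @\<^sub>v p)))"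
    by (simp add: strang_def)
  also have "lin_flow (2 * d) (MB S d c) (h / 2) (u @\<^sub>v p) = u @\<^sub>v p1"
    unfolding p1_def by (rule flowB_eq[OF u p]) (use h in simp)
  also have "lin_flow (2 * d) (MA S d c) h (u @\<^sub>v p1) = u2 @\<^sub>v p2"
    unfolding u2_def p2_def by (rule flowA_eq[OF S u p1]) (use h in simp)
  also have "lin_flow (2 * d) (MB S d c) (h / 2) (u2 @\<^sub>v p2) = u2 @\<^sub>v (p2 + (h/2) \<cdot>\<^sub>v (Kc S d c *\<^sub>v u2))"
    by (rule flowB_eq[OF u2 p2]) (use h in simp)
  finally show ?thesis .
qed

lemma energy_invariant:
  fixes c :: real
  assumes S: "S > 0" and h: "h > 0" and u: "u \<in> carrier_vec d" and p: "p \<in> carrier_vec d"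
  defines "C \<equiv> csf c h" and "s \<equiv> snf c h" and "t \<equiv> h / 2" and "a \<equiv> 1 - c^2"
  defines "p1 \<equiv> p + (h/2) \<cdot>\<^sub>v (Kc S d c *\<^sub>v u)"
  defines "u2 \<equiv> csf c h \<cdot>\<^sub>v u - snf c h \<cdot>\<^sub>v (Linv S d *\<^sub>v p1)"
  defines "p2 \<equiv> (c^2 * snf c h) \<cdot>\<^sub>v (Lmat S d *\<^sub>v u) + csf c h \<cdot>\<^sub>v p1"
  defines "be \<equiv> c^2 * s + 2 * C * t * a - s * t^2 * a^2" and "al \<equiv> 2 * t * C - 2 * s * t^2 * a"
    and "ga \<equiv> s * t^2"
  shows "En S d be al ga s u2 (p2 + (h/2) \<cdot>\<^sub>v (Kc S d c *\<^sub>v u2)) = En S d be al ga s u p"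
proof -
  have p1: "p1 \<in> carrier_vec d" using p by (simp add: p1_def)
  define w1 where "w1 = Linv S d *\<^sub>v p1"
  have w1: "w1 \<in> carrier_vec d" using S by (simp add: w1_def)
  have u2: "u2 \<in> carrier_vec d" using u S by (simp add: u2_def)
  have p2: "p2 \<in> carrier_vec d" using p1 by (simp add: p2_def)
  have u2': "u2 = C \<cdot>\<^sub>v u + (-s) \<cdot>\<^sub>v w1"
    unfolding u2_def C_def s_def w1_def by (rule minus_smult_conv[OF u]) (use S in simp)
  have Lu: "Lmat S d *\<^sub>v u \<in> carrier_vec d" by simp
  have w2: "Linv S d *\<^sub>v p2 = (c^2 * s) \<cdot>\<^sub>v u + C \<cdot>\<^sub>v w1"
    unfolding p2_def mv2[OF Linv_carrier[OF S] Lu p1] Linv_L_vec[OF S u]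
    by (simp add: C_def s_def w1_def)
  have "En S d be al ga s u2 (p2 + (h/2) \<cdot>\<^sub>v (Kc S d c *\<^sub>v u2)) = Fn S d be al ga s a t u2 (Linv S d *\<^sub>v p2)"
    unfolding a_def t_def by (rule Bstep[OF S u2 p2])
  also have "\<dots> = Fn S d be al ga s a t (C \<cdot>\<^sub>v u + (-s) \<cdot>\<^sub>v w1) ((c^2 * s) \<cdot>\<^sub>v u + C \<cdot>\<^sub>v w1)"
    unfolding u2' w2 ..
  also have "\<dots> = Fn S d be al ga s a (-t) u w1"
  proof (rule Astep[OF S u w1])
    show "C^2 + c^2 * s^2 = 1" unfolding C_def s_def by (rule cs_sn_id)
  qed (simp_all add: be_def al_def ga_def)
  also have "\<dots> = En S d be al ga s u (p1 + (-t) \<cdot>\<^sub>v (Kc S d c *\<^sub>v u))"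
    unfolding a_def w1_def by (rule Bstep[OF S u p1, symmetric])
  also have "p1 + (-t) \<cdot>\<^sub>v (Kc S d c *\<^sub>v u) = p"
    using p by (intro eq_vecI) (auto simp: p1_def t_def)
  finally show ?thesis .
qed


lemma energy_bounds:
  assumes S: "S > 0" and u: "u \<in> carrier_vec d" and p: "p \<in> carrier_vec d"
    and be: "be \<ge> 0" and ga: "ga \<ge> 0" and q: "q > 0"
  shows "(be * (omega1 S d)^2 + al - ga / (omega1 S d)^2) * (u \<bullet> u) + (q / (4 / (ds S d)^2)) * (p \<bullet> p)
           \<le> En S d be al ga q u p"
    "En S d be al ga q u p \<le> (be * (4 / (ds S d)^2) + \<bar>al\<bar>) * (u \<bullet> u) + (q / (omega1 S d)^2) * (p \<bullet> p)"
proof -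
  define om2 where "om2 = (omega1 S d)^2"
  define K where "K = 4 / (ds S d)^2"
  have om2: "om2 > 0" using omega1_pos[OF S, of d] by (simp add: om2_def)
  have K: "K > 0" using ds_pos[OF S, of d] by (simp add: K_def)
  define w where "w = Linv S d *\<^sub>v p"
  have w: "w \<in> carrier_vec d" using S by (simp add: w_def)
  have Lw: "Lmat S d *\<^sub>v w = p" using L_Linv_vec[OF S p] by (simp add: w_def)
  have uu: "0 \<le> u \<bullet> u" and pp: "0 \<le> p \<bullet> p" by (rule sp_self_nonneg)+
  define X where "X = - (u \<bullet> (Lmat S d *\<^sub>v u))"
  define Y where "Y = - (u \<bullet> (Linv S d *\<^sub>v u))"
  define Z where "Z = - (w \<bullet> (Lmat S d *\<^sub>v w))"
  have En: "En S d be al ga q u p = be * X + al * (u \<bullet> u) - ga * Y + q * Z"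
    by (simp add: En_def X_def Y_def Z_def w_def)
  have X1: "om2 * (u \<bullet> u) \<le> X" unfolding om2_def X_def by (rule L_coercive[OF S u])
  have X2: "X \<le> K * (u \<bullet> u)" unfolding K_def X_def by (rule L_upper[OF S u])
  have Y0: "0 \<le> Y" unfolding Y_def by (rule Linv_bounds(1)[OF S u])
  have Y1: "om2 * Y \<le> u \<bullet> u" unfolding om2_def Y_def by (rule Linv_bounds(2)[OF S u])
  have Y2: "Y \<le> (u \<bullet> u) / om2" using Y1 om2 by (simp add: field_simps)
  have Z1: "p \<bullet> p \<le> K * Z" using L_sq_bound[OF S w] unfolding Lw K_def Z_def .
  have Z1': "(q / K) * (p \<bullet> p) \<le> q * Z"
  proof -
    have "p \<bullet> p / K \<le> Z" using Z1 K by (simp add: field_simps)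
    then show ?thesis using q by (simp add: mult_left_mono divide_simps)
  qed
  have Zp: "Z = - (p \<bullet> (Linv S d *\<^sub>v p))"
  proof -
    have "Z = - (w \<bullet> p)" unfolding Z_def Lw ..
    also have "w \<bullet> p = p \<bullet> w" by (rule comm_scalar_prod[OF w p])
    finally show ?thesis by (simp add: w_def)
  qed
  have Z2: "om2 * Z \<le> p \<bullet> p" unfolding Zp om2_def by (rule Linv_bounds(2)[OF S p])
  have Z2': "q * Z \<le> (q / om2) * (p \<bullet> p)"
  proof -
    have "Z \<le> p \<bullet> p / om2" using Z2 om2 by (simp add: field_simps)
    then have "q * Z \<le> q * (p \<bullet> p / om2)" using q by (intro mult_left_mono) auto
    then show ?thesis by simp
  qed
  have A1: "be * om2 * (u \<bullet> u) \<le> be * X" using mult_left_mono[OF X1 be] by (simp add: mult.assoc)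
  have A2: "be * X \<le> be * K * (u \<bullet> u)" using mult_left_mono[OF X2 be] by (simp add: mult.assoc)
  have B1: "ga * Y \<le> ga / om2 * (u \<bullet> u)" using mult_left_mono[OF Y2 ga] by (simp add: field_simps)
  have B2: "0 \<le> ga * Y" using ga Y0 by simp
  have C1: "al * (u \<bullet> u) \<le> \<bar>al\<bar> * (u \<bullet> u)" using uu by (simp add: mult_right_mono)
  show "(be * (omega1 S d)^2 + al - ga / (omega1 S d)^2) * (u \<bullet> u) + (q / (4 / (ds S d)^2)) * (p \<bullet> p)
           \<le> En S d be al ga q u p"
    unfolding En om2_def[symmetric] K_def[symmetric] using A1 B1 Z1'
    by (simp add: algebra_simps)
  show "En S d be al ga q u p \<le> (be * (4 / (ds S d)^2) + \<bar>al\<bar>) * (u \<bullet> u) + (q / (omega1 S d)^2) * (p \<bullet> p)"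
    unfolding En om2_def[symmetric] K_def[symmetric] using A2 B2 C1 Z2'
    by (simp add: algebra_simps)
qed

lemma vnorm_sp: "vnorm x = sqrt (x \<bullet> x)"
  unfolding vnorm_def scalar_prod_def by (simp add: atLeast0LessThan power2_eq_square)


theorem theorem8p1:
  fixes S h c :: real and d :: nat
  assumes "S > 0" and "d \<ge> 1" and "0 \<le> c" and "c \<le> 1" and "h > 0"
    and "c > 0 \<Longrightarrow> c * h + 2 * arctan (h * (1 + (1 - c\<^sup>2) * (omega1 S d)\<^sup>2)
                                         / (2 * c * (omega1 S d)\<^sup>2)) < pi"
    and "c = 0 \<Longrightarrow> h < 2 * omega1 S d / sqrt (1 + (omega1 S d)\<^sup>2)"
  shows "\<exists>C. \<forall>n::nat. \<forall>x. dim_vec x = 2 * d \<longrightarrow>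
           vnorm ((strang S d c h ^^ n) x) \<le> C * vnorm x"
proof -
  note S = assms(1) and h = assms(5)
  define om where "om = omega1 S d"
  have om: "om > 0" using omega1_pos[OF S] by (simp add: om_def)
  define K where "K = 4 / (ds S d)^2"
  have K: "K > 0" using ds_pos[OF S, of d] by (simp add: K_def)
  define C where "C = csf c h"
  define s where "s = snf c h"
  define t where "t = h / 2"
  define a where "a = 1 - c^2"
  define be where "be = c^2 * s + 2 * C * t * a - s * t^2 * a^2"
  define al where "al = 2 * t * C - 2 * s * t^2 * a"
  define ga where "ga = s * t^2"
  have sc: "snf c h > 0" "\<bar>csf c h - h / 2 * snf c h * (1 - c^2)\<bar> \<le> 1"
    "\<bar>csf c h - h / 2 * snf c h * (1 - c^2 + 1 / om^2)\<bar> < 1"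
    using scalar_conds[OF assms(3) assms(4) h om] assms(6,7) unfolding om_def by auto
  define P0 where "P0 = C - t * s * a"
  define P1 where "P1 = P0 - t * s / om^2"
  have s: "s > 0" using sc(1) by (simp add: s_def)
  have P0: "\<bar>P0\<bar> \<le> 1" using sc(2) by (simp add: P0_def C_def t_def s_def a_def)
  have "P1 = csf c h - h / 2 * snf c h * (1 - c^2 + 1 / om^2)"
    by (simp add: P1_def P0_def C_def t_def s_def a_def field_simps)
  then have P1: "\<bar>P1\<bar> < 1" using sc(3) by simp
  have id: "C^2 + c^2 * s^2 = 1" unfolding C_def s_def by (rule cs_sn_id)
  have sbe: "s * be = 1 - P0^2"
    apply (rule diff_zero[where X = "C^2 + c^2 * s^2" and Z = "-1"])
     apply (simp add: be_def P0_def power2_eq_square algebra_simps)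
    apply (rule id)
    done
  have be: "be \<ge> 0"
  proof -
    have "0 \<le> 1 - P0^2" using P0 by (simp add: abs_le_square_iff power_le_one abs_square_le_1)
    then have "0 \<le> s * be" using sbe by simp
    then show ?thesis using s by (simp add: zero_le_mult_iff)
  qed
  have ga: "ga \<ge> 0" using s by (simp add: ga_def)
  define m1 where "m1 = be * om^2 + al - ga / om^2"
  have sm1: "s * m1 = om^2 * (1 - P1^2)"
  proof -
    have "s * m1 = (s * be) * om^2 + s * al - s * ga / om^2" by (simp add: m1_def algebra_simps)
    also have "\<dots> = (1 - P0^2) * om^2 + s * al - s * ga / om^2" by (simp add: sbe)
    also have "\<dots> = om^2 * (1 - P1^2)"
      using om by (simp add: P1_def P0_def al_def ga_def field_simps power2_eq_square)
    finally show ?thesis .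
  qed
  have m1: "m1 > 0"
  proof -
    have "P1^2 < 1" using P1 by (simp add: abs_square_less_1)
    then have "0 < om^2 * (1 - P1^2)" using om by simp
    then have "0 < s * m1" using sm1 by simp
    then show ?thesis using s by (simp add: zero_less_mult_iff)
  qed
  define m where "m = min m1 (s / K)"
  have m: "m > 0" using m1 s K by (simp add: m_def)
  define M where "M = max (be * K + \<bar>al\<bar>) (s / om^2)"
  define G where "G x = En S d be al ga s (vec_first x d) (vec_last x d)" for x
  have dd: "2 * d = d + d" by simp
  have split: "vec_first x d @\<^sub>v vec_last x d = x" if "x \<in> carrier_vec (2 * d)" for x :: "real vec"
    using that unfolding dd by simp
  have nsq: "x \<bullet> x = vec_first x d \<bullet> vec_first x d + vec_last x d \<bullet> vec_last x d"
    if "x \<in> carrier_vec (2 * d)" for x :: "real vec"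
  proof -
    have "x \<bullet> x = (vec_first x d @\<^sub>v vec_last x d) \<bullet> (vec_first x d @\<^sub>v vec_last x d)"
      by (simp only: split[OF that])
    also have "\<dots> = vec_first x d \<bullet> vec_first x d + vec_last x d \<bullet> vec_last x d"
      by (rule scalar_prod_append[of _ d _ d]) auto
    finally show ?thesis .
  qed
  have Gbounds: "m * (x \<bullet> x) \<le> G x \<and> G x \<le> M * (x \<bullet> x)" if x: "x \<in> carrier_vec (2 * d)" for x
  proof -
    let ?u = "vec_first x d" and ?p = "vec_last x d"
    have uu: "0 \<le> ?u \<bullet> ?u" and pp: "0 \<le> ?p \<bullet> ?p" by (rule sp_self_nonneg)+
    have lo: "m1 * (?u \<bullet> ?u) + (s / K) * (?p \<bullet> ?p) \<le> G x"
      using energy_bounds(1)[OF S vec_first_carrier[of x d] vec_last_carrier[of x d] be ga s, where al = al]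
      by (simp add: G_def m1_def om_def K_def)
    have hi: "G x \<le> (be * K + \<bar>al\<bar>) * (?u \<bullet> ?u) + (s / om^2) * (?p \<bullet> ?p)"
      using energy_bounds(2)[OF S vec_first_carrier[of x d] vec_last_carrier[of x d] be ga s, where al = al]
      by (simp add: G_def om_def K_def)
    have "m * (?u \<bullet> ?u) \<le> m1 * (?u \<bullet> ?u)" using uu by (intro mult_right_mono) (auto simp: m_def)
    moreover have "m * (?p \<bullet> ?p) \<le> (s / K) * (?p \<bullet> ?p)" using pp by (intro mult_right_mono) (auto simp: m_def)
    moreover have "(be * K + \<bar>al\<bar>) * (?u \<bullet> ?u) \<le> M * (?u \<bullet> ?u)" using uu by (intro mult_right_mono) (auto simp: M_def)
    moreover have "(s / om^2) * (?p \<bullet> ?p) \<le> M * (?p \<bullet> ?p)" using pp by (intro mult_right_mono) (auto simp: M_def)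
    ultimately show ?thesis using lo hi nsq[OF x] by (simp add: algebra_simps)
  qed
  have step: "strang S d c h x \<in> carrier_vec (2 * d) \<and> G (strang S d c h x) = G x"
    if x: "x \<in> carrier_vec (2 * d)" for x
  proof -
    let ?u = "vec_first x d" and ?p = "vec_last x d"
    have u: "?u \<in> carrier_vec d" and p: "?p \<in> carrier_vec d" by simp_all
    define p1 where "p1 = ?p + (h/2) \<cdot>\<^sub>v (Kc S d c *\<^sub>v ?u)"
    define u2 where "u2 = csf c h \<cdot>\<^sub>v ?u - snf c h \<cdot>\<^sub>v (Linv S d *\<^sub>v p1)"
    define p2 where "p2 = (c^2 * snf c h) \<cdot>\<^sub>v (Lmat S d *\<^sub>v ?u) + csf c h \<cdot>\<^sub>v p1"
    define p3 where "p3 = p2 + (h/2) \<cdot>\<^sub>v (Kc S d c *\<^sub>v u2)"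
    have p1c: "p1 \<in> carrier_vec d" using p by (simp add: p1_def)
    have u2: "u2 \<in> carrier_vec d" using u S by (simp add: u2_def)
    have p3: "p3 \<in> carrier_vec d" using p1c by (simp add: p3_def p2_def)
    have "strang S d c h x = strang S d c h (?u @\<^sub>v ?p)" by (simp only: split[OF x])
    also have "\<dots> = u2 @\<^sub>v p3"
      unfolding u2_def p3_def p2_def p1_def by (rule strang_step[OF S h u p])
    finally have e: "strang S d c h x = u2 @\<^sub>v p3" .
    have "G (strang S d c h x) = En S d be al ga s u2 p3"
      unfolding e G_def first_last_append[OF u2 p3] ..
    also have "\<dots> = En S d be al ga s ?u ?p"
      unfolding p3_def p2_def u2_def p1_def be_def al_def ga_def C_def s_def t_def a_def
      by (rule energy_invariant[OF S h u p])
    finally show ?thesis using u2 p3 e by (simp add: G_def mult_2)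
  qed
  have iter: "(strang S d c h ^^ n) x \<in> carrier_vec (2 * d) \<and> G ((strang S d c h ^^ n) x) = G x"
    if x: "x \<in> carrier_vec (2 * d)" for n x
  proof (induction n)
    case 0 then show ?case using x by simp
  next
    case (Suc n) then show ?case using step[of "(strang S d c h ^^ n) x"] by simp
  qed
  show ?thesis
  proof (rule exI[of _ "sqrt (M / m)"], intro allI impI)
    fix n :: nat and x :: "real vec" assume dx: "dim_vec x = 2 * d"
    then have x: "x \<in> carrier_vec (2 * d)" by (rule carrier_vecI)
    let ?y = "(strang S d c h ^^ n) x"
    have y: "?y \<in> carrier_vec (2 * d)" and Gy: "G ?y = G x" using iter[OF x] by auto
    have "m * (?y \<bullet> ?y) \<le> M * (x \<bullet> x)" using Gbounds[OF y] Gbounds[OF x] Gy by linarith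
    then have "?y \<bullet> ?y \<le> (M / m) * (x \<bullet> x)" using m by (simp add: field_simps)
    then have "sqrt (?y \<bullet> ?y) \<le> sqrt ((M / m) * (x \<bullet> x))" by (rule real_sqrt_le_mono)
    also have "\<dots> = sqrt (M / m) * sqrt (x \<bullet> x)" by (rule real_sqrt_mult)
    finally show "vnorm ?y \<le> sqrt (M / m) * vnorm x" by (simp add: vnorm_sp)
  qed
qed


end
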